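(* Let $d$ be prime, $n\ge1$, $G$ invertible over $\mathbb Z_d$, and $\rho,\tau,\sigma,\rho_1,\rho_2,\sigma_1,\sigma_2$ be $n$-qudit states. (1) If $G$ is odd-parity positive, $\|\sigma\boxtimes\rho-\sigma\boxtimes\tau\|_{W_1}\le\|\rho-\tau\|_{W_1}$. (2) If $G$ is even-parity positive, $\|\rho\boxtimes\sigma-\tau\boxtimes\sigma\|_{W_1}\le\|\rho-\tau\|_{W_1}$. (3) If $G$ is positive, $\|\rho_1\boxtimes\sigma_1-\rho_2\boxtimes\sigma_2\|_{W_1}\le\|\rho_1-\rho_2\|_{W_1}+\|\sigma_1-\sigma_2\|_{W_1}$.
   Context: Fix a prime $d$. Let $G=\begin{pmatrix}g_{00}&g_{01}\\ g_{10}&g_{11}\end{pmatrix}$ over $\mathbb Z_d$ with $\det G\not\equiv0$, $N=(\det G)^{-1}$. $G$ is nontrivial if at most one entry is $0$ mod $d$; odd-parity positive if nontrivial and $g_{01},g_{10}\not\equiv0$; even-parity positive if nontrivial and $g_{00},g_{11}\not\equiv0$; positive if both. Key unitary on $(\mathbb C^d)^{\otimes n}\otimes(\mathbb C^d)^{\otimes n}$: $U|\vec i\rangle|\vec j\rangle=|Ng_{11}\vec i-Ng_{10}\vec j\rangle|-Ng_{01}\vec i+Ng_{00}\vec j\rangle$; convolution $\rho\boxtimes\sigma=\mathrm{Tr}_B[U(\rho\otimes\sigma)U^\dagger]$. The quantum Wasserstein distance of order 1 (De Palma–Marvian–Trevisan–Lloyd) is $\|\rho-\sigma\|_{W_1}=\min\{\sum_{i=1}^n|c_i|:\rho-\sigma=\sum_{i=1}^nc_i(\rho_i-\sigma_i),\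 \rho_i,\sigma_i\ n\text{-qudit states},\ \mathrm{Tr}_i\rho_i=\mathrm{Tr}_i\sigma_i\ \forall i\}$, where $\mathrm{Tr}_i$ is the partial trace over the $i$-th qudit. *)

theory Defs
  imports Complex_Main "HOL-Computational_Algebra.Primes"
begin

(* Computational basis labels of n qudits of dimension d: functions
   {0..<n} -> {0..<d}, extended by 0 outside {0..<n}. *)
definition qbasis :: "nat \<Rightarrow> nat \<Rightarrow> (nat \<Rightarrow> nat) set" where
  "qbasis d n = {x. (\<forall>k<n. x k < d) \<and> (\<forall>k\<ge>n. x k = 0)}"

(* Operators on span of a finite basis S are matrices 'a => 'a => complex;
   only entries on S x S are meaningful. *)
definition mmul :: "'a set \<Rightarrow> ('a \<Rightarrow> 'a \<Rightarrow> complex) \<Rightarrow> ('a \<Rightarrow> 'a \<Rightarrow> complex) \<Rightarrow> ('a \<Rightarrow> 'a \<Rightarrow> complex)" where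
  "mmul S A B = (\<lambda>x y. \<Sum>z\<in>S. A x z * B z y)"

definition adj :: "('a \<Rightarrow> 'a \<Rightarrow> complex) \<Rightarrow> ('a \<Rightarrow> 'a \<Rightarrow> complex)" where
  "adj A = (\<lambda>x y. cnj (A y x))"

definition mtrace :: "'a set \<Rightarrow> ('a \<Rightarrow> 'a \<Rightarrow> complex) \<Rightarrow> complex" where
  "mtrace S A = (\<Sum>x\<in>S. A x x)"

definition psd :: "'a set \<Rightarrow> ('a \<Rightarrow> 'a \<Rightarrow> complex) \<Rightarrow> bool" where
  "psd S A = (\<forall>v :: 'a \<Rightarrow> complex.
      Im (\<Sum>x\<in>S. \<Sum>y\<in>S. cnj (v x) * A x y * v y) = 0 \<and>
      Re (\<Sum>x\<in>S. \<Sum>y\<in>S. cnj (v x) * A x y * v y) \<ge> 0)"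

definition qstate :: "nat \<Rightarrow> nat \<Rightarrow> ((nat \<Rightarrow> nat) \<Rightarrow> (nat \<Rightarrow> nat) \<Rightarrow> complex) \<Rightarrow> bool" where
  "qstate d n A = (psd (qbasis d n) A \<and> mtrace (qbasis d n) A = 1)"

(* partial trace over the i-th qudit; the result does not depend on the
   i-th coordinate of its arguments *)
definition ptr1 :: "nat \<Rightarrow> nat \<Rightarrow> ((nat \<Rightarrow> nat) \<Rightarrow> (nat \<Rightarrow> nat) \<Rightarrow> complex)
                      \<Rightarrow> ((nat \<Rightarrow> nat) \<Rightarrow> (nat \<Rightarrow> nat) \<Rightarrow> complex)" where
  "ptr1 d i A = (\<lambda>x y. \<Sum>k<d. A (x(i := k)) (y(i := k)))"

definition ptr1_eq :: "nat \<Rightarrow> nat \<Rightarrow> nat \<Rightarrow> ((nat \<Rightarrow> nat) \<Rightarrow> (nat \<Rightarrow> nat) \<Rightarrow> complex)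
                      \<Rightarrow> ((nat \<Rightarrow> nat) \<Rightarrow> (nat \<Rightarrow> nat) \<Rightarrow> complex) \<Rightarrow> bool" where
  "ptr1_eq d n i A B = (\<forall>x\<in>qbasis d n. \<forall>y\<in>qbasis d n. ptr1 d i A x y = ptr1 d i B x y)"

(* quantum Wasserstein distance of order 1 of the operator X (De Palma et al.) *)
definition W1 :: "nat \<Rightarrow> nat \<Rightarrow> ((nat \<Rightarrow> nat) \<Rightarrow> (nat \<Rightarrow> nat) \<Rightarrow> complex) \<Rightarrow> real" where
  "W1 d n X = Inf {(\<Sum>i<n. \<bar>c i\<bar>) | c rs ss.
       (\<forall>i<n. qstate d n (rs i) \<and> qstate d n (ss i) \<and> ptr1_eq d n i (rs i) (ss i)) \<and>
       (\<forall>x\<in>qbasis d n. \<forall>y\<in>qbasis d n.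
          X x y = (\<Sum>i<n. complex_of_real (c i) * (rs i x y - ss i x y)))}"

definition mdiff :: "('a \<Rightarrow> 'a \<Rightarrow> complex) \<Rightarrow> ('a \<Rightarrow> 'a \<Rightarrow> complex) \<Rightarrow> ('a \<Rightarrow> 'a \<Rightarrow> complex)" where
  "mdiff A B = (\<lambda>x y. A x y - B x y)"

definition inv_modd :: "nat \<Rightarrow> int \<Rightarrow> int" where
  "inv_modd d a = (SOME b. 0 \<le> b \<and> b < int d \<and> (a * b) mod int d = 1)"

definition det2 :: "int \<Rightarrow> int \<Rightarrow> int \<Rightarrow> int \<Rightarrow> int" where
  "det2 g00 g01 g10 g11 = g00 * g11 - g01 * g10"

definition lincomb :: "nat \<Rightarrow> int \<Rightarrow> int \<Rightarrow> (nat \<Rightarrow> nat) \<Rightarrow> (nat \<Rightarrow> nat) \<Rightarrow> (nat \<Rightarrow> nat)" where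
  "lincomb d a b i j = (\<lambda>k. nat ((a * int (i k) + b * int (j k)) mod int d))"

definition Umap :: "nat \<Rightarrow> int \<Rightarrow> int \<Rightarrow> int \<Rightarrow> int \<Rightarrow> (nat \<Rightarrow> nat) \<times> (nat \<Rightarrow> nat) \<Rightarrow> (nat \<Rightarrow> nat) \<times> (nat \<Rightarrow> nat)" where
  "Umap d g00 g01 g10 g11 p =
     (let N = inv_modd d (det2 g00 g01 g10 g11) in
       (lincomb d (N * g11) (- N * g10) (fst p) (snd p),
        lincomb d (- N * g01) (N * g00) (fst p) (snd p)))"

definition Umat :: "nat \<Rightarrow> int \<Rightarrow> int \<Rightarrow> int \<Rightarrow> int \<Rightarrow> ((nat \<Rightarrow> nat) \<times> (nat \<Rightarrow> nat)) \<Rightarrow> ((nat \<Rightarrow> nat) \<times> (nat \<Rightarrow> nat)) \<Rightarrow> complex" where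
  "Umat d g00 g01 g10 g11 = (\<lambda>p r. if p = Umap d g00 g01 g10 g11 r then 1 else 0)"

definition tensor :: "('a \<Rightarrow> 'a \<Rightarrow> complex) \<Rightarrow> ('b \<Rightarrow> 'b \<Rightarrow> complex) \<Rightarrow> ('a \<times> 'b \<Rightarrow> 'a \<times> 'b \<Rightarrow> complex)" where
  "tensor A B = (\<lambda>p q. A (fst p) (fst q) * B (snd p) (snd q))"

definition ptrB :: "'b set \<Rightarrow> ('a \<times> 'b \<Rightarrow> 'a \<times> 'b \<Rightarrow> complex) \<Rightarrow> ('a \<Rightarrow> 'a \<Rightarrow> complex)" where
  "ptrB S X = (\<lambda>a a'. \<Sum>b\<in>S. X (a, b) (a', b))"

definition qconv :: "nat \<Rightarrow> nat \<Rightarrow> int \<Rightarrow> int \<Rightarrow> int \<Rightarrow> int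
     \<Rightarrow> ((nat \<Rightarrow> nat) \<Rightarrow> (nat \<Rightarrow> nat) \<Rightarrow> complex) \<Rightarrow> ((nat \<Rightarrow> nat) \<Rightarrow> (nat \<Rightarrow> nat) \<Rightarrow> complex)
     \<Rightarrow> ((nat \<Rightarrow> nat) \<Rightarrow> (nat \<Rightarrow> nat) \<Rightarrow> complex)" where
  "qconv d n g00 g01 g10 g11 \<rho> \<sigma> =
     (let S2 = qbasis d n \<times> qbasis d n; U = Umat d g00 g01 g10 g11 in
       ptrB (qbasis d n) (mmul S2 (mmul S2 U (tensor \<rho> \<sigma>)) (adj U)))"

definition nontrivial :: "nat \<Rightarrow> int \<Rightarrow> int \<Rightarrow> int \<Rightarrow> int \<Rightarrow> bool" where
  "nontrivial d g00 g01 g10 g11 =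
     (length (filter (\<lambda>g. g mod int d = 0) [g00, g01, g10, g11]) \<le> 1)"

definition odd_pos :: "nat \<Rightarrow> int \<Rightarrow> int \<Rightarrow> int \<Rightarrow> int \<Rightarrow> bool" where
  "odd_pos d g00 g01 g10 g11 = (nontrivial d g00 g01 g10 g11 \<and>
      g01 mod int d \<noteq> 0 \<and> g10 mod int d \<noteq> 0)"

definition even_pos :: "nat \<Rightarrow> int \<Rightarrow> int \<Rightarrow> int \<Rightarrow> int \<Rightarrow> bool" where
  "even_pos d g00 g01 g10 g11 = (nontrivial d g00 g01 g10 g11 \<and>
      g00 mod int d \<noteq> 0 \<and> g11 mod int d \<noteq> 0)"

definition positive_G :: "nat \<Rightarrow> int \<Rightarrow> int \<Rightarrow> int \<Rightarrow> int \<Rightarrow> bool" where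
  "positive_G d g00 g01 g10 g11 = (odd_pos d g00 g01 g10 g11 \<and> even_pos d g00 g01 g10 g11)"

end

theory Submission
  imports Defs
begin

definition qf :: "'a set \<Rightarrow> ('a \<Rightarrow> 'a \<Rightarrow> complex) \<Rightarrow> ('a \<Rightarrow> complex) \<Rightarrow> complex" where
  "qf S A v = (\<Sum>x\<in>S. \<Sum>y\<in>S. cnj (v x) * A x y * v y)"

lemma psd_qf: "psd S A \<longleftrightarrow> (\<forall>v. Im (qf S A v) = 0 \<and> Re (qf S A v) \<ge> 0)"
  by (simp add: psd_def qf_def)

lemma qf_supp:
  assumes "finite S" "T \<subseteq> S" "\<forall>u\<in>S - T. v u = 0"
  shows "qf S A v = qf T A v"
proof -
  have "qf S A v = (\<Sum>x\<in>T. \<Sum>y\<in>S. cnj (v x) * A x y * v y)"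
    unfolding qf_def by (rule sum.mono_neutral_right) (use assms in auto)
  also have "\<dots> = qf T A v"
    unfolding qf_def by (intro sum.cong refl sum.mono_neutral_right) (use assms in auto)
  finally show ?thesis .
qed

lemma qf_two:
  assumes "finite S" "x \<in> S" "y \<in> S" "x \<noteq> y"
  shows "qf S A (\<lambda>u. if u = x then a else if u = y then b else 0)
       = cnj a * A x x * a + cnj a * A x y * b + cnj b * A y x * a + cnj b * A y y * b"
proof -
  have "qf S A (\<lambda>u. if u = x then a else if u = y then b else 0)
      = qf {x,y} A (\<lambda>u. if u = x then a else if u = y then b else 0)"
    by (rule qf_supp) (use assms in auto)
  also have "\<dots> = cnj a * A x x * a + cnj a * A x y * b + cnj b * A y x * a + cnj b * A y y * b"
    using assms(4) by (simp add: qf_def algebra_simps)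
  finally show ?thesis .
qed

lemma qf_one:
  assumes "finite S" "x \<in> S"
  shows "qf S A (\<lambda>u. if u = x then a else 0) = cnj a * A x x * a"
proof -
  have "qf S A (\<lambda>u. if u = x then a else 0) = (\<Sum>u\<in>S. \<Sum>w\<in>S. if w = x then (if u = x then cnj a * A x x * a else 0) else 0)"
    unfolding qf_def by (intro sum.cong) auto
  then show ?thesis using assms by simp
qed

lemma psd_herm:
  assumes "finite S" "psd S A" "x \<in> S" "y \<in> S"
  shows "A x y = cnj (A y x)"
proof (cases "x = y")
  case True
  have "Im (qf S A (\<lambda>u. if u = x then 1 else 0)) = 0" using assms(2) by (simp add: psd_qf)
  then have "Im (A x x) = 0" using qf_one[OF assms(1,3), of A 1] by simp
  then show ?thesis using True by (simp add: complex_eq_iff)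
next
  case False
  have "Im (qf S A (\<lambda>u. if u = x then 1 else 0)) = 0" "Im (qf S A (\<lambda>u. if u = y then 1 else 0)) = 0"
    using assms(2) by (simp_all add: psd_qf)
  then have i1: "Im (A x x) = 0" "Im (A y y) = 0"
    using qf_one[OF assms(1,3), of A 1] qf_one[OF assms(1,4), of A 1] by simp_all
  have "Im (qf S A (\<lambda>u. if u = x then 1 else if u = y then 1 else 0)) = 0"
    using assms(2) by (simp add: psd_qf)
  then have h1: "Im (A x y) + Im (A y x) = 0" using qf_two[OF assms(1,3,4) False, of A 1 1] i1 by simp
  have "Im (qf S A (\<lambda>u. if u = x then 1 else if u = y then \<i> else 0)) = 0"
    using assms(2) by (simp add: psd_qf)
  then have h2: "Re (A x y) - Re (A y x) = 0" using qf_two[OF assms(1,3,4) False, of A 1 \<i>] i1 by simp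
  show ?thesis using h1 h2 by (simp add: complex_eq_iff)
qed

lemma qf_cong: "(\<And>x. x \<in> S \<Longrightarrow> v x = w x) \<Longrightarrow> (\<And>x y. x \<in> S \<Longrightarrow> y \<in> S \<Longrightarrow> A x y = B x y)
   \<Longrightarrow> qf S A v = qf S B w"
  unfolding qf_def by (intro sum.cong refl) auto

lemma psd_cong: "(\<And>x y. x \<in> S \<Longrightarrow> y \<in> S \<Longrightarrow> A x y = B x y) \<Longrightarrow> psd S A = psd S B"
  unfolding psd_qf using qf_cong[of S _ _ A B] by metis

lemma psd_subset:
  assumes "finite S" "T \<subseteq> S" "psd S A"
  shows "psd T A"
  unfolding psd_qf
proof
  fix v
  let ?w = "\<lambda>u. if u \<in> T then v u else (0::complex)"
  have "qf S A ?w = qf T A ?w" by (rule qf_supp) (use assms in auto)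
  also have "\<dots> = qf T A v" by (rule qf_cong) auto
  finally show "Im (qf T A v) = 0 \<and> 0 \<le> Re (qf T A v)" using assms(3) unfolding psd_qf by metis
qed

lemma sum_if_const: "(\<Sum>y\<in>S. if P then f y else 0) = (if P then (\<Sum>y\<in>S. f y) else 0)"
  by (cases P) auto

lemma qf_add_delta:
  assumes "finite S" "s \<in> S"
  shows "qf S A (\<lambda>u. v u + (if u = s then t else 0)) = qf S A v + t * (\<Sum>x\<in>S. cnj (v x) * A x s)
     + cnj t * (\<Sum>y\<in>S. A s y * v y) + cnj t * A s s * t"
proof -
  have pt: "\<And>x y. cnj (v x + (if x = s then t else 0)) * A x y * (v y + (if y = s then t else 0))
     = cnj (v x) * A x y * v y + (if y = s then cnj (v x) * A x s * t else 0)
       + (if x = s then cnj t * A s y * v y else 0) + (if x = s then (if y = s then cnj t * A s s * t else 0) else 0)"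
    by (auto simp: algebra_simps)
  show ?thesis unfolding qf_def pt
    using assms by (simp add: sum.distrib sum_distrib_left sum_distrib_right sum_if_const algebra_simps)
qed

lemma schur_psd:
  assumes fin: "finite S" and sS: "s \<in> S" and P: "psd S A" and r: "A s s \<noteq> 0"
  shows "psd S (\<lambda>x y. A x y - A x s * A s y / A s s)"
proof -
  let ?B = "\<lambda>x y. A x y - A x s * A s y / A s s"
  have H: "\<And>x y. x \<in> S \<Longrightarrow> y \<in> S \<Longrightarrow> A x y = cnj (A y x)" using psd_herm[OF fin P] by blast
  have rr: "cnj (A s s) = A s s" using H[OF sS sS] by simp
  show ?thesis unfolding psd_qf
  proof
    fix v :: "'a \<Rightarrow> complex"
    define \<alpha> where "\<alpha> = (\<Sum>y\<in>S. A s y * v y)"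
    define t where "t = - \<alpha> / A s s"
    have c1: "(\<Sum>x\<in>S. cnj (v x) * A x s) = cnj \<alpha>"
      unfolding \<alpha>_def by (simp add: H[OF _ sS] sS mult.commute)
    have "qf S A (\<lambda>u. v u + (if u = s then t else 0)) = qf S A v - cnj \<alpha> * \<alpha> / A s s"
      unfolding qf_add_delta[OF fin sS] c1 \<alpha>_def[symmetric] t_def using r rr
      by (simp add: field_simps)
    moreover have "qf S ?B v = qf S A v - cnj \<alpha> * \<alpha> / A s s"
    proof -
      have "qf S ?B v = qf S A v - (\<Sum>x\<in>S. \<Sum>y\<in>S. (cnj (v x) * A x s) * (A s y * v y) / A s s)"
        unfolding qf_def by (simp add: algebra_simps sum_subtractf)
      also have "(\<Sum>x\<in>S. \<Sum>y\<in>S. (cnj (v x) * A x s) * (A s y * v y) / A s s)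
          = (\<Sum>x\<in>S. cnj (v x) * A x s) * (\<Sum>y\<in>S. A s y * v y) / A s s"
        by (simp add: sum_distrib_left sum_distrib_right sum_divide_distrib, rule sum.swap)
      finally show ?thesis unfolding c1 \<alpha>_def[symmetric] .
    qed
    ultimately have "qf S ?B v = qf S A (\<lambda>u. v u + (if u = s then t else 0))" by simp
    then show "Im (qf S ?B v) = 0 \<and> 0 \<le> Re (qf S ?B v)" using P unfolding psd_qf by metis
  qed
qed

lemma psd_zero_diag:
  assumes fin: "finite S" and P: "psd S A" and sS: "s \<in> S" and yS: "y \<in> S" and z: "A s s = 0"
  shows "A s y = 0"
proof (rule ccontr)
  assume ne: "A s y \<noteq> 0"
  then have sy: "s \<noteq> y" using z by auto
  have H: "A y s = cnj (A s y)" using psd_herm[OF fin P yS sS] .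
  have ry: "Im (A y y) = 0" using psd_herm[OF fin P yS yS] by (simp add: complex_eq_iff)
  define N2 where "N2 = Re (A s y) * Re (A s y) + Im (A s y) * Im (A s y)"
  define c where "c = (Re (A y y) + 1) / (2 * N2)"
  define t where "t = - complex_of_real c * A s y"
  have cpos: "N2 > 0" using ne unfolding N2_def
    by (simp add: sum_squares_gt_zero_iff complex_eq_iff)
  have q: "qf S A (\<lambda>u. if u = s then t else if u = y then 1 else 0)
      = cnj t * A s y + A y s * t + A y y"
    using qf_two[OF fin sS yS sy, of A t 1] z by simp
  have "Re (qf S A (\<lambda>u. if u = s then t else if u = y then 1 else 0)) \<ge> 0" using P by (simp add: psd_qf)
  moreover have "Re (cnj t * A s y + A y s * t + A y y) = - 2 * c * N2 + Re (A y y)"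
    unfolding t_def H N2_def by (simp add: algebra_simps)
  moreover have "- 2 * c * N2 = - (Re (A y y) + 1)"
    unfolding c_def using cpos by (simp add: field_simps)
  ultimately show False using q by simp
qed

lemma psd_decomp:
  assumes "finite S"
  shows "psd S A \<Longrightarrow> \<exists>W (m::nat). \<forall>x\<in>S. \<forall>y\<in>S. A x y = (\<Sum>k<m. W k x * cnj (W k y))"
  using assms
proof (induction S arbitrary: A rule: finite_induct)
  case empty
  then show ?case by auto
next
  case (insert s S A)
  have fin: "finite (insert s S)" using insert by simp
  have sS: "s \<in> insert s S" by simp
  have ns: "\<And>x. x \<in> S \<Longrightarrow> (x = s) = False" using insert.hyps(2) by auto
  have H: "\<And>x y. x \<in> insert s S \<Longrightarrow> y \<in> insert s S \<Longrightarrow> A x y = cnj (A y x)"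
    using psd_herm[OF fin insert.prems(1)] by blast
  show ?case
  proof (cases "A s s = 0")
    case True
    have z1: "\<And>y. y \<in> insert s S \<Longrightarrow> A s y = 0" using psd_zero_diag[OF fin insert.prems(1) sS] True by blast
    have z2: "\<And>y. y \<in> insert s S \<Longrightarrow> A y s = 0" using z1 H sS by (metis complex_cnj_zero)
    have pA: "psd S A" by (rule psd_subset[OF fin _ insert.prems(1)]) auto
    obtain W and m :: nat where W: "\<forall>x\<in>S. \<forall>y\<in>S. A x y = (\<Sum>k<m. W k x * cnj (W k y))"
      using insert.IH[OF pA] by blast
    let ?W = "\<lambda>k x. if x = s then 0 else W k x"
    have "\<forall>x\<in>insert s S. \<forall>y\<in>insert s S. A x y = (\<Sum>k<m. ?W k x * cnj (?W k y))"
      using W z1 z2 insert.hyps(2) by (auto simp: ns)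
    then show ?thesis by (intro exI[of _ ?W] exI[of _ m])
  next
    case False
    let ?B = "\<lambda>x y. A x y - A x s * A s y / A s s"
    have PB: "psd (insert s S) ?B" by (rule schur_psd[OF fin sS insert.prems(1) False])
    have pB: "psd S ?B" by (rule psd_subset[OF fin _ PB]) auto
    obtain W and m :: nat where W: "\<forall>x\<in>S. \<forall>y\<in>S. ?B x y = (\<Sum>k<m. W k x * cnj (W k y))"
      using insert.IH[OF pB] by blast
    have "Im (qf (insert s S) A (\<lambda>u. if u = s then 1 else 0)) = 0 \<and> Re (qf (insert s S) A (\<lambda>u. if u = s then 1 else 0)) \<ge> 0"
      using insert.prems(1) unfolding psd_qf by blast
    then have rs: "Im (A s s) = 0" "Re (A s s) \<ge> 0" using qf_one[OF fin sS, of A 1] by simp_all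
    have rpos: "Re (A s s) > 0" using rs False by (cases "Re (A s s) = 0") (auto simp: complex_eq_iff)
    have Ass: "A s s = complex_of_real (Re (A s s))" using rs by (simp add: complex_eq_iff)
    define a where "a x = A x s / complex_of_real (sqrt (Re (A s s)))" for x
    have aa: "a x * cnj (a y) = A x s * A s y / A s s" if "x \<in> insert s S" "y \<in> insert s S" for x y
    proof -
      have sq: "complex_of_real (sqrt (Re (A s s))) * complex_of_real (sqrt (Re (A s s))) = A s s"
      proof -
        have "sqrt (Re (A s s)) * sqrt (Re (A s s)) = Re (A s s)" using rpos by simp
        then have "complex_of_real (sqrt (Re (A s s))) * complex_of_real (sqrt (Re (A s s))) = complex_of_real (Re (A s s))"
          by (metis of_real_mult)
        then show ?thesis using Ass by simp
      qed
      have "a x * cnj (a y) = A x s * cnj (A y s) / (complex_of_real (sqrt (Re (A s s))) * complex_of_real (sqrt (Re (A s s))))"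
        unfolding a_def by simp
      also have "\<dots> = A x s * A s y / A s s"
      proof -
        have "cnj (A y s) = A s y" using H[OF that(2) sS] by simp
        then show ?thesis using sq by simp
      qed
      finally show ?thesis .
    qed
    let ?W = "\<lambda>k x. if k = m then a x else if x = s then 0 else W k x"
    have Bz1: "?B s y = 0" if "y \<in> insert s S" for y using False by simp
    have Bz2: "?B y s = 0" if "y \<in> insert s S" for y using False by simp
    have "A x y = (\<Sum>k<Suc m. ?W k x * cnj (?W k y))" if xy: "x \<in> insert s S" "y \<in> insert s S" for x y
    proof -
      have "(\<Sum>k<Suc m. ?W k x * cnj (?W k y)) = (\<Sum>k<m. ?W k x * cnj (?W k y)) + a x * cnj (a y)"
        by simp
      also have "(\<Sum>k<m. ?W k x * cnj (?W k y)) = ?B x y"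
      proof (cases "x = s \<or> y = s")
        case True
        then show ?thesis using Bz1 Bz2 xy by auto
      next
        case F: False
        then have "x \<in> S" "y \<in> S" using xy by auto
        then show ?thesis using W F by auto
      qed
      finally show ?thesis using aa[OF xy] False by simp
    qed
    then show ?thesis by (intro exI[of _ ?W] exI[of _ "Suc m"]) blast
  qed
qed

lemma nonneg_sum_c:
  assumes "\<And>i. i \<in> I \<Longrightarrow> Im (f i) = 0 \<and> Re (f i) \<ge> 0"
  shows "Im (sum f I) = 0 \<and> Re (sum f I) \<ge> 0"
  using assms by (simp add: Im_sum Re_sum sum_nonneg)

lemma qf_tensor_decomp:
  assumes fS: "finite S" and fT: "finite T"
    and W: "\<forall>x\<in>S. \<forall>y\<in>S. A x y = (\<Sum>k<m. W k x * cnj (W k y))"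
  shows "qf (S \<times> T) (tensor A B) v = (\<Sum>k<m. qf T B (\<lambda>b. \<Sum>a\<in>S. cnj (W k a) * v (a, b)))"
proof -
  have cp: "\<And>f::'a\<times>'b\<Rightarrow>complex. (\<Sum>p\<in>S\<times>T. f p) = (\<Sum>a\<in>S. \<Sum>b\<in>T. f (a,b))"
    by (simp add: sum.cartesian_product)
  have "qf (S \<times> T) (tensor A B) v
      = (\<Sum>a\<in>S. \<Sum>b\<in>T. \<Sum>a'\<in>S. \<Sum>b'\<in>T. cnj (v (a,b)) * A a a' * B b b' * v (a',b'))"
    unfolding qf_def tensor_def cp by (simp add: algebra_simps)
  also have "\<dots> = (\<Sum>a\<in>S. \<Sum>b\<in>T. \<Sum>a'\<in>S. \<Sum>b'\<in>T. \<Sum>k<m. cnj (v (a,b)) * W k a * cnj (W k a') * B b b' * v (a',b'))"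
    by (intro sum.cong refl) (simp add: W sum_distrib_left sum_distrib_right algebra_simps)
  also have "\<dots> = (\<Sum>k<m. \<Sum>a\<in>S. \<Sum>b\<in>T. \<Sum>a'\<in>S. \<Sum>b'\<in>T. cnj (v (a,b)) * W k a * cnj (W k a') * B b b' * v (a',b'))"
  proof -
    have "\<And>a b a'. (\<Sum>b'\<in>T. \<Sum>k<m. cnj (v (a,b)) * W k a * cnj (W k a') * B b b' * v (a',b'))
         = (\<Sum>k<m. \<Sum>b'\<in>T. cnj (v (a,b)) * W k a * cnj (W k a') * B b b' * v (a',b'))"
      by (rule sum.swap)
    moreover have "\<And>a b. (\<Sum>a'\<in>S. \<Sum>k<m. \<Sum>b'\<in>T. cnj (v (a,b)) * W k a * cnj (W k a') * B b b' * v (a',b'))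
         = (\<Sum>k<m. \<Sum>a'\<in>S. \<Sum>b'\<in>T. cnj (v (a,b)) * W k a * cnj (W k a') * B b b' * v (a',b'))"
      by (rule sum.swap)
    moreover have "\<And>a. (\<Sum>b\<in>T. \<Sum>k<m. \<Sum>a'\<in>S. \<Sum>b'\<in>T. cnj (v (a,b)) * W k a * cnj (W k a') * B b b' * v (a',b'))
         = (\<Sum>k<m. \<Sum>b\<in>T. \<Sum>a'\<in>S. \<Sum>b'\<in>T. cnj (v (a,b)) * W k a * cnj (W k a') * B b b' * v (a',b'))"
      by (rule sum.swap)
    moreover have "(\<Sum>a\<in>S. \<Sum>k<m. \<Sum>b\<in>T. \<Sum>a'\<in>S. \<Sum>b'\<in>T. cnj (v (a,b)) * W k a * cnj (W k a') * B b b' * v (a',b'))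
         = (\<Sum>k<m. \<Sum>a\<in>S. \<Sum>b\<in>T. \<Sum>a'\<in>S. \<Sum>b'\<in>T. cnj (v (a,b)) * W k a * cnj (W k a') * B b b' * v (a',b'))"
      by (rule sum.swap)
    ultimately show ?thesis by simp
  qed
  also have "\<dots> = (\<Sum>k<m. qf T B (\<lambda>b. \<Sum>a\<in>S. cnj (W k a) * v (a, b)))"
  proof (rule sum.cong[OF refl])
    fix k
    have "qf T B (\<lambda>b. \<Sum>a\<in>S. cnj (W k a) * v (a, b))
       = (\<Sum>b\<in>T. \<Sum>b'\<in>T. \<Sum>a\<in>S. \<Sum>a'\<in>S. cnj (v (a,b)) * W k a * cnj (W k a') * B b b' * v (a',b'))"
      unfolding qf_def by (simp add: sum_distrib_left sum_distrib_right algebra_simps)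
    also have "\<dots> = (\<Sum>b\<in>T. \<Sum>a\<in>S. \<Sum>b'\<in>T. \<Sum>a'\<in>S. cnj (v (a,b)) * W k a * cnj (W k a') * B b b' * v (a',b'))"
      by (intro sum.cong refl sum.swap)
    also have "\<dots> = (\<Sum>a\<in>S. \<Sum>b\<in>T. \<Sum>b'\<in>T. \<Sum>a'\<in>S. cnj (v (a,b)) * W k a * cnj (W k a') * B b b' * v (a',b'))"
      by (rule sum.swap)
    also have "\<dots> = (\<Sum>a\<in>S. \<Sum>b\<in>T. \<Sum>a'\<in>S. \<Sum>b'\<in>T. cnj (v (a,b)) * W k a * cnj (W k a') * B b b' * v (a',b'))"
      by (intro sum.cong refl sum.swap)
    finally show "(\<Sum>a\<in>S. \<Sum>b\<in>T. \<Sum>a'\<in>S. \<Sum>b'\<in>T. cnj (v (a,b)) * W k a * cnj (W k a') * B b b' * v (a',b'))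
        = qf T B (\<lambda>b. \<Sum>a\<in>S. cnj (W k a) * v (a, b))" by simp
  qed
  finally show ?thesis .
qed

lemma psd_tensor:
  assumes fS: "finite S" and fT: "finite T" and A: "psd S A" and B: "psd T B"
  shows "psd (S \<times> T) (tensor A B)"
proof -
  obtain W and m :: nat where W: "\<forall>x\<in>S. \<forall>y\<in>S. A x y = (\<Sum>k<m. W k x * cnj (W k y))"
    using psd_decomp[OF fS A] by blast
  show ?thesis unfolding psd_qf
  proof
    fix v
    show "Im (qf (S \<times> T) (tensor A B) v) = 0 \<and> 0 \<le> Re (qf (S \<times> T) (tensor A B) v)"
      unfolding qf_tensor_decomp[OF fS fT W]
      by (rule nonneg_sum_c) (use B in \<open>simp add: psd_qf\<close>)
  qed
qed

lemma psd_lin: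
  assumes "psd S A" "psd S B" "a \<ge> 0" "b \<ge> 0"
  shows "psd S (\<lambda>x y. complex_of_real a * A x y + complex_of_real b * B x y)"
proof -
  have "\<And>v. qf S (\<lambda>x y. complex_of_real a * A x y + complex_of_real b * B x y) v
      = complex_of_real a * qf S A v + complex_of_real b * qf S B v"
    unfolding qf_def by (simp add: sum.distrib sum_distrib_left algebra_simps)
  then show ?thesis using assms unfolding psd_qf by simp
qed

lemma qbasis_0: "qbasis d 0 = {\<lambda>_. 0}"
  unfolding qbasis_def by auto

lemma qbasis_Suc: "bij_betw (\<lambda>(z,j). z(n:=j)) (qbasis d n \<times> {..<d}) (qbasis d (Suc n))"
proof (rule bij_betwI')
  fix p q assume "p \<in> qbasis d n \<times> {..<d}" "q \<in> qbasis d n \<times> {..<d}"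
  moreover obtain z j z' j' where pq: "p = (z,j)" "q = (z',j')" by (cases p, cases q) auto
  ultimately have zz: "z n = 0" "z' n = 0" unfolding qbasis_def by auto
  have "z = z' \<and> j = j'" if e: "z(n:=j) = z'(n:=j')"
  proof
    show "j = j'" using fun_cong[OF e, of n] by simp
    show "z = z'"
    proof
      fix k show "z k = z' k" using fun_cong[OF e, of k] zz by (cases "k = n") auto
    qed
  qed
  then show "((\<lambda>(z,j). z(n:=j)) p = (\<lambda>(z,j). z(n:=j)) q) = (p = q)"
    using pq by auto
next
  fix p assume "p \<in> qbasis d n \<times> {..<d}"
  then show "(\<lambda>(z,j). z(n:=j)) p \<in> qbasis d (Suc n)"
    unfolding qbasis_def by (cases p) (auto simp: less_Suc_eq)
next
  fix y assume y: "y \<in> qbasis d (Suc n)"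
  show "\<exists>x\<in>qbasis d n \<times> {..<d}. y = (\<lambda>(z,j). z(n:=j)) x"
    by (rule bexI[of _ "(y(n:=0), y n)"]) (use y in \<open>auto simp: qbasis_def\<close>)
qed

lemma finite_qbasis: "finite (qbasis d n)"
proof (induction n)
  case 0 then show ?case by (simp add: qbasis_0)
next
  case (Suc n)
  then show ?case using bij_betw_imp_surj_on[OF qbasis_Suc[of n d]] by (metis finite_SigmaI finite_imageI finite_lessThan)
qed

lemma card_qbasis: "card (qbasis d n) = d ^ n"
proof (induction n)
  case 0 then show ?case by (simp add: qbasis_0)
next
  case (Suc n)
  then show ?case using bij_betw_same_card[OF qbasis_Suc[of n d]] by (simp add: card_cartesian_product mult.commute)
qed

lemma qbasis_split_coord:
  assumes "i < n"
  shows "bij_betw (\<lambda>(b,l). b(i:=l)) ({b\<in>qbasis d n. b i = 0} \<times> {..<d}) (qbasis d n)"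
proof (rule bij_betwI')
  fix p q assume "p \<in> {b\<in>qbasis d n. b i = 0} \<times> {..<d}" "q \<in> {b\<in>qbasis d n. b i = 0} \<times> {..<d}"
  moreover obtain z j z' j' where pq: "p = (z,j)" "q = (z',j')" by (cases p, cases q) auto
  ultimately have zz: "z i = 0" "z' i = 0" by auto
  have "z = z' \<and> j = j'" if e: "z(i:=j) = z'(i:=j')"
  proof
    show "j = j'" using fun_cong[OF e, of i] by simp
    show "z = z'"
    proof
      fix k show "z k = z' k" using fun_cong[OF e, of k] zz by (cases "k = i") auto
    qed
  qed
  then show "((\<lambda>(b,l). b(i:=l)) p = (\<lambda>(b,l). b(i:=l)) q) = (p = q)"
    using pq by auto
next
  fix p assume "p \<in> {b\<in>qbasis d n. b i = 0} \<times> {..<d}"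
  then show "(\<lambda>(b,l). b(i:=l)) p \<in> qbasis d n"
    using assms unfolding qbasis_def by (cases p) auto
next
  fix y assume y: "y \<in> qbasis d n"
  show "\<exists>x\<in>{b\<in>qbasis d n. b i = 0} \<times> {..<d}. y = (\<lambda>(b,l). b(i:=l)) x"
    by (rule bexI[of _ "(y(i:=0), y i)"]) (use y assms in \<open>auto simp: qbasis_def\<close>)
qed

lemma sum_split_coord:
  assumes "i < n"
  shows "(\<Sum>b\<in>qbasis d n. f b) = (\<Sum>b\<in>{b\<in>qbasis d n. b i = 0}. \<Sum>l<d. f (b(i:=l)))"
proof -
  have "(\<Sum>b\<in>qbasis d n. f b) = (\<Sum>p\<in>{b\<in>qbasis d n. b i = 0} \<times> {..<d}. f ((\<lambda>(b,l). b(i:=l)) p))"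
    using sum.reindex_bij_betw[OF qbasis_split_coord[OF assms], of f] by simp
  also have "\<dots> = (\<Sum>b\<in>{b\<in>qbasis d n. b i = 0}. \<Sum>l<d. f (b(i:=l)))"
    by (simp add: sum.cartesian_product split_def)
  finally show ?thesis .
qed

definition mg :: "nat \<Rightarrow> (nat \<Rightarrow> nat) \<Rightarrow> (nat \<Rightarrow> nat) \<Rightarrow> (nat \<Rightarrow> nat)" where
  "mg m z x = (\<lambda>k. if k < m then z k else x k)"

definition Q0 :: "nat \<Rightarrow> nat \<Rightarrow> nat \<Rightarrow> (nat \<Rightarrow> nat) set" where
  "Q0 d n m = {x\<in>qbasis d n. \<forall>k<m. x k = 0}"

lemma qbasis_split_mg:
  assumes "m \<le> n"
  shows "bij_betw (\<lambda>(z,x). mg m z x) (qbasis d m \<times> Q0 d n m) (qbasis d n)"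
proof (rule bij_betwI')
  fix p q assume "p \<in> qbasis d m \<times> Q0 d n m" "q \<in> qbasis d m \<times> Q0 d n m"
  moreover obtain z x z' x' where pq: "p = (z,x)" "q = (z',x')" by (cases p, cases q) auto
  ultimately have zz: "\<forall>k\<ge>m. z k = 0" "\<forall>k\<ge>m. z' k = 0" "\<forall>k<m. x k = 0" "\<forall>k<m. x' k = 0"
    unfolding qbasis_def Q0_def by auto
  have "z = z' \<and> x = x'" if e: "mg m z x = mg m z' x'"
  proof
    show "z = z'"
    proof
      fix k show "z k = z' k" using fun_cong[OF e, of k] zz by (cases "k < m") (auto simp: mg_def)
    qed
    show "x = x'"
    proof
      fix k show "x k = x' k" using fun_cong[OF e, of k] zz by (cases "k < m") (auto simp: mg_def)
    qed
  qed
  then show "((\<lambda>(z,x). mg m z x) p = (\<lambda>(z,x). mg m z x) q) = (p = q)"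
    using pq by auto
next
  fix p assume "p \<in> qbasis d m \<times> Q0 d n m"
  then show "(\<lambda>(z,x). mg m z x) p \<in> qbasis d n"
    using assms unfolding qbasis_def Q0_def mg_def by (cases p) auto
next
  fix y assume y: "y \<in> qbasis d n"
  show "\<exists>x\<in>qbasis d m \<times> Q0 d n m. y = (\<lambda>(z,x). mg m z x) x"
    by (rule bexI[of _ "(\<lambda>k. if k < m then y k else 0, \<lambda>k. if k < m then 0 else y k)"])
       (use y assms in \<open>auto simp: qbasis_def Q0_def mg_def fun_eq_iff\<close>)
qed

lemma sum_split_mg:
  assumes "m \<le> n"
  shows "(\<Sum>x\<in>qbasis d n. f x) = (\<Sum>z\<in>qbasis d m. \<Sum>x\<in>Q0 d n m. f (mg m z x))"
proof -
  have "(\<Sum>x\<in>qbasis d n. f x) = (\<Sum>p\<in>qbasis d m \<times> Q0 d n m. f ((\<lambda>(z,x). mg m z x) p))"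
    using sum.reindex_bij_betw[OF qbasis_split_mg[OF assms], of f] by simp
  also have "\<dots> = (\<Sum>z\<in>qbasis d m. \<Sum>x\<in>Q0 d n m. f (mg m z x))"
    by (simp add: sum.cartesian_product split_def)
  finally show ?thesis .
qed

lemma qf_sum_mat:
  "qf S (\<lambda>x y. \<Sum>i\<in>I. M i x y) v = (\<Sum>i\<in>I. qf S (M i) v)"
  unfolding qf_def
  by (simp add: sum_distrib_left sum_distrib_right, subst sum.swap, rule sum.cong[OF refl], subst sum.swap, rule refl)

lemma psd_sum:
  assumes "\<And>i. i \<in> I \<Longrightarrow> psd S (M i)"
  shows "psd S (\<lambda>x y. \<Sum>i\<in>I. M i x y)"
  unfolding psd_qf qf_sum_mat
  by (intro allI nonneg_sum_c) (use assms in \<open>auto simp: psd_qf\<close>)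

lemma psd_scale:
  assumes "psd S M" "c \<ge> 0"
  shows "psd S (\<lambda>x y. complex_of_real c * M x y)"
proof -
  have "\<And>v. qf S (\<lambda>x y. complex_of_real c * M x y) v = complex_of_real c * qf S M v"
    unfolding qf_def by (simp add: sum_distrib_left algebra_simps)
  then show ?thesis using assms unfolding psd_qf by simp
qed

lemma psd_block:
  assumes fin: "finite S" and P: "psd S M"
  shows "psd S (\<lambda>x y. (if f x = f y then 1 else 0) * M x y)"
proof -
  have "qf S (\<lambda>x y. (if f x = f y then 1 else 0) * M x y) v
      = (\<Sum>c\<in>f ` S. qf S M (\<lambda>x. if f x = c then v x else 0))" for v
  proof -
    have "(\<Sum>c\<in>f ` S. qf S M (\<lambda>x. if f x = c then v x else 0))
        = (\<Sum>c\<in>f ` S. \<Sum>x\<in>S. \<Sum>y\<in>S. if f x = c then (if f y = f x then cnj (v x) * M x y * v y else 0) else 0)"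
      unfolding qf_def by (intro sum.cong refl) auto
    also have "\<dots> = (\<Sum>x\<in>S. \<Sum>c\<in>f ` S. if f x = c then (\<Sum>y\<in>S. if f y = f x then cnj (v x) * M x y * v y else 0) else 0)"
      by (subst sum.swap) (simp add: sum_if_const)
    also have "\<dots> = (\<Sum>x\<in>S. \<Sum>y\<in>S. if f y = f x then cnj (v x) * M x y * v y else 0)"
      using fin by (intro sum.cong refl) (simp add: sum.delta')
    also have "\<dots> = qf S (\<lambda>x y. (if f x = f y then 1 else 0) * M x y) v"
      unfolding qf_def by (intro sum.cong refl) auto
    finally show ?thesis by simp
  qed
  then show ?thesis unfolding psd_qf
    by (intro allI) (simp only:, rule nonneg_sum_c, use P in \<open>simp add: psd_qf\<close>)
qed

lemma psd_compose:
  assumes fin: "finite S" and P: "psd S A" and g: "g ` S \<subseteq> S"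
  shows "psd S (\<lambda>x y. A (g x) (g y))"
proof -
  have "qf S (\<lambda>x y. A (g x) (g y)) v = qf S A (\<lambda>p. \<Sum>x\<in>{x\<in>S. g x = p}. v x)" for v
  proof -
    have "qf S A (\<lambda>p. \<Sum>x\<in>{x\<in>S. g x = p}. v x)
        = (\<Sum>p\<in>S. \<Sum>q\<in>S. \<Sum>y\<in>{y\<in>S. g y = q}. \<Sum>x\<in>{x\<in>S. g x = p}. cnj (v x) * A p q * v y)"
      unfolding qf_def by (simp add: sum_distrib_left sum_distrib_right cnj_sum)
    also have "\<dots> = (\<Sum>p\<in>S. \<Sum>q\<in>S. \<Sum>y\<in>{y\<in>S. g y = q}. \<Sum>x\<in>{x\<in>S. g x = p}. cnj (v x) * A (g x) (g y) * v y)"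
      by (intro sum.cong refl) auto
    also have "\<dots> = (\<Sum>p\<in>S. \<Sum>q\<in>S. \<Sum>x\<in>{x\<in>S. g x = p}. \<Sum>y\<in>{y\<in>S. g y = q}. cnj (v x) * A (g x) (g y) * v y)"
      by (rule sum.cong[OF refl], rule sum.cong[OF refl], rule sum.swap)
    also have "\<dots> = (\<Sum>p\<in>S. \<Sum>x\<in>{x\<in>S. g x = p}. \<Sum>q\<in>S. \<Sum>y\<in>{y\<in>S. g y = q}. cnj (v x) * A (g x) (g y) * v y)"
      by (rule sum.cong[OF refl], rule sum.swap)
    also have "\<dots> = (\<Sum>x\<in>S. \<Sum>q\<in>S. \<Sum>y\<in>{y\<in>S. g y = q}. cnj (v x) * A (g x) (g y) * v y)"
      by (rule sum.group[OF fin fin g])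
    also have "\<dots> = (\<Sum>x\<in>S. \<Sum>y\<in>S. cnj (v x) * A (g x) (g y) * v y)"
      by (intro sum.cong refl sum.group[OF fin fin g])
    finally show ?thesis unfolding qf_def by simp
  qed
  then show ?thesis using P unfolding psd_qf by simp
qed

type_synonym mat = "(nat \<Rightarrow> nat) \<Rightarrow> (nat \<Rightarrow> nat) \<Rightarrow> complex"

definition pre :: "nat \<Rightarrow> (nat \<Rightarrow> nat) \<Rightarrow> (nat \<Rightarrow> nat)" where
  "pre m x = (\<lambda>k. if k < m then x k else 0)"

definition Tm :: "nat \<Rightarrow> nat \<Rightarrow> mat \<Rightarrow> mat" where
  "Tm d m A = (\<lambda>x y. (if pre m x = pre m y then 1 else 0) *
      (complex_of_real (1 / real d ^ m) * (\<Sum>z\<in>qbasis d m. A (mg m z x) (mg m z y))))"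

lemma mg_in: "m \<le> n \<Longrightarrow> z \<in> qbasis d m \<Longrightarrow> x \<in> qbasis d n \<Longrightarrow> mg m z x \<in> qbasis d n"
  unfolding qbasis_def mg_def by auto

lemma mg_mg: "mg m z (mg m w x) = mg m z x"
  unfolding mg_def by auto

lemma Tm_psd:
  assumes "m \<le> n" "psd (qbasis d n) A"
  shows "psd (qbasis d n) (Tm d m A)"
  unfolding Tm_def
proof (rule psd_block[OF finite_qbasis], rule psd_scale[OF _ divide_nonneg_nonneg], rule psd_sum)
  fix z assume "z \<in> qbasis d m"
  then show "psd (qbasis d n) (\<lambda>x y. A (mg m z x) (mg m z y))"
    by (intro psd_compose[OF finite_qbasis assms(2)]) (use mg_in assms(1) in blast)
qed auto

lemma Tm_trace:
  assumes "m \<le> n" "0 < d"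
  shows "mtrace (qbasis d n) (Tm d m A) = mtrace (qbasis d n) A"
proof -
  define G where "G x = (\<Sum>z\<in>qbasis d m. A (mg m z x) (mg m z x))" for x
  have "(\<Sum>x\<in>qbasis d n. G x) = (\<Sum>w\<in>qbasis d m. \<Sum>x\<in>Q0 d n m. G (mg m w x))"
    by (rule sum_split_mg[OF assms(1)])
  also have "\<dots> = (\<Sum>w\<in>qbasis d m. \<Sum>x\<in>Q0 d n m. G x)"
    unfolding G_def mg_mg ..
  also have "\<dots> = of_nat (d ^ m) * (\<Sum>x\<in>Q0 d n m. G x)"
    by (simp add: card_qbasis)
  also have "(\<Sum>x\<in>Q0 d n m. G x) = (\<Sum>z\<in>qbasis d m. \<Sum>x\<in>Q0 d n m. A (mg m z x) (mg m z x))"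
    unfolding G_def by (rule sum.swap)
  also have "\<dots> = mtrace (qbasis d n) A"
    unfolding mtrace_def by (rule sum_split_mg[OF assms(1), symmetric])
  finally have e: "(\<Sum>x\<in>qbasis d n. G x) = of_nat (d ^ m) * mtrace (qbasis d n) A" .
  have "mtrace (qbasis d n) (Tm d m A) = complex_of_real (1 / real d ^ m) * (\<Sum>x\<in>qbasis d n. G x)"
    unfolding mtrace_def Tm_def G_def by (simp add: sum_distrib_left)
  then show ?thesis unfolding e using assms(2) by simp
qed

lemma Tm_0: "Tm d 0 A x y = A x y"
  unfolding Tm_def pre_def mg_def by (simp add: qbasis_0)

lemma Tm_n:
  assumes "x \<in> qbasis d n" "y \<in> qbasis d n"
  shows "Tm d n A x y = (if x = y then complex_of_real (1 / real d ^ n) else 0) * mtrace (qbasis d n) A"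
proof -
  have px: "pre n x = x" "pre n y = y" using assms unfolding pre_def qbasis_def by auto
  have "\<And>z. z \<in> qbasis d n \<Longrightarrow> mg n z x = z \<and> mg n z y = z"
    using assms unfolding mg_def qbasis_def by (auto simp: fun_eq_iff)
  then have "(\<Sum>z\<in>qbasis d n. A (mg n z x) (mg n z y)) = mtrace (qbasis d n) A"
    unfolding mtrace_def by (intro sum.cong) auto
  then show ?thesis unfolding Tm_def px by simp
qed

lemma sum_qbasis_Suc: "(\<Sum>z\<in>qbasis d (Suc m). f z) = (\<Sum>z\<in>qbasis d m. \<Sum>j<d. f (z(m:=j)))"
proof -
  have "(\<Sum>z\<in>qbasis d (Suc m). f z) = (\<Sum>p\<in>qbasis d m \<times> {..<d}. f ((\<lambda>(z,j). z(m:=j)) p))"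
    using sum.reindex_bij_betw[OF qbasis_Suc[of m d], of f] by simp
  also have "\<dots> = (\<Sum>z\<in>qbasis d m. \<Sum>j<d. f (z(m:=j)))"
    by (simp add: sum.cartesian_product split_def)
  finally show ?thesis .
qed

lemma Tm_ptr:
  assumes "0 < d"
  shows "ptr1 d m (Tm d m A) x y = ptr1 d m (Tm d (Suc m) A) x y"
proof -
  have p1: "pre m (x(m:=j)) = pre m x" "pre m (y(m:=j)) = pre m y" for j
    unfolding pre_def by auto
  have p2: "(pre (Suc m) (x(m:=j)) = pre (Suc m) (y(m:=j))) = (pre m x = pre m y)" for j
    unfolding pre_def fun_eq_iff by (auto simp: less_Suc_eq)
  have m2: "mg (Suc m) z (x(m:=j)) = mg (Suc m) z x" "mg (Suc m) z (y(m:=j)) = mg (Suc m) z y" for z j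
    unfolding mg_def by auto
  have m3: "mg (Suc m) (z(m:=j)) x = mg m z (x(m:=j))" "mg (Suc m) (z(m:=j)) y = mg m z (y(m:=j))" for z j
    unfolding mg_def by (auto simp: fun_eq_iff less_Suc_eq)
  define E where "E = (if pre m x = pre m y then 1 else (0::complex))"
  have "ptr1 d m (Tm d (Suc m) A) x y = of_nat d * (E * (complex_of_real (1 / real d ^ Suc m) *
        (\<Sum>z\<in>qbasis d (Suc m). A (mg (Suc m) z x) (mg (Suc m) z y))))"
    unfolding ptr1_def Tm_def p2 m2 E_def by simp
  also have "(\<Sum>z\<in>qbasis d (Suc m). A (mg (Suc m) z x) (mg (Suc m) z y))
      = (\<Sum>z\<in>qbasis d m. \<Sum>j<d. A (mg m z (x(m:=j))) (mg m z (y(m:=j))))"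
    unfolding sum_qbasis_Suc m3 ..
  also have "\<dots> = (\<Sum>j<d. \<Sum>z\<in>qbasis d m. A (mg m z (x(m:=j))) (mg m z (y(m:=j))))"
    by (rule sum.swap)
  finally have r: "ptr1 d m (Tm d (Suc m) A) x y = E * (complex_of_real (1 / real d ^ m) *
       (\<Sum>j<d. \<Sum>z\<in>qbasis d m. A (mg m z (x(m:=j))) (mg m z (y(m:=j)))))"
    using assms by (simp add: field_simps)
  have "ptr1 d m (Tm d m A) x y = E * (complex_of_real (1 / real d ^ m) *
       (\<Sum>j<d. \<Sum>z\<in>qbasis d m. A (mg m z (x(m:=j))) (mg m z (y(m:=j)))))"
    unfolding ptr1_def Tm_def p1 E_def by (simp add: sum_distrib_left)
  then show ?thesis using r by simp
qed

definition dec :: "nat \<Rightarrow> nat \<Rightarrow> mat \<Rightarrow> (nat \<Rightarrow> real) \<Rightarrow> (nat \<Rightarrow> mat) \<Rightarrow> (nat \<Rightarrow> mat) \<Rightarrow> bool" where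
  "dec d n X c rs ss = ((\<forall>i<n. qstate d n (rs i) \<and> qstate d n (ss i) \<and> ptr1_eq d n i (rs i) (ss i)) \<and>
       (\<forall>x\<in>qbasis d n. \<forall>y\<in>qbasis d n.
          X x y = (\<Sum>i<n. complex_of_real (c i) * (rs i x y - ss i x y))))"

definition W1set :: "nat \<Rightarrow> nat \<Rightarrow> mat \<Rightarrow> real set" where
  "W1set d n X = {(\<Sum>i<n. \<bar>c i\<bar>) | c rs ss. dec d n X c rs ss}"

lemma W1_eq: "W1 d n X = Inf (W1set d n X)"
  unfolding W1_def W1set_def dec_def ..

lemma W1set_bdd: "bdd_below (W1set d n X)"
  unfolding W1set_def by (rule bdd_belowI[of _ 0]) (auto intro: sum_nonneg)

lemma W1_mono:
  assumes "W1set d n X \<noteq> {}" "W1set d n X \<subseteq> W1set d n Y"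
  shows "W1 d n Y \<le> W1 d n X"
  unfolding W1_eq by (rule cInf_superset_mono[OF assms(1) W1set_bdd assms(2)])

definition mix :: "real \<Rightarrow> mat \<Rightarrow> mat \<Rightarrow> mat" where
  "mix t A B = (\<lambda>x y. complex_of_real t * A x y + complex_of_real (1 - t) * B x y)"

lemma qstate_mix:
  assumes "qstate d n A" "qstate d n B" "0 \<le> t" "t \<le> 1"
  shows "qstate d n (mix t A B)"
proof -
  have "psd (qbasis d n) (mix t A B)" unfolding mix_def
    by (rule psd_lin) (use assms in \<open>auto simp: qstate_def\<close>)
  moreover have "mtrace (qbasis d n) (mix t A B) = complex_of_real t * mtrace (qbasis d n) A + complex_of_real (1 - t) * mtrace (qbasis d n) B"
    unfolding mtrace_def mix_def by (simp add: sum.distrib sum_distrib_left)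
  then have "mtrace (qbasis d n) (mix t A B) = 1"
    using assms unfolding qstate_def by (simp add: algebra_simps)
  ultimately show ?thesis unfolding qstate_def by simp
qed

lemma ptr1_mix: "ptr1 d i (mix t A B) x y = complex_of_real t * ptr1 d i A x y + complex_of_real (1 - t) * ptr1 d i B x y"
  unfolding ptr1_def mix_def by (simp add: sum.distrib sum_distrib_left)

lemma ptr1_eq_mix:
  assumes "ptr1_eq d n i A A'" "ptr1_eq d n i B B'"
  shows "ptr1_eq d n i (mix t A B) (mix t A' B')"
  using assms unfolding ptr1_eq_def ptr1_mix by simp

lemma ptr1_eq_mix':
  assumes "ptr1_eq d n i A B'" "ptr1_eq d n i B A'"
  shows "ptr1_eq d n i (mix (1/2) A B) (mix (1/2) A' B')"
  using assms unfolding ptr1_eq_def ptr1_mix by (simp add: algebra_simps)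

lemma W1set_nonempty:
  assumes d: "0 < d" and r: "qstate d n \<rho>" and t: "qstate d n \<tau>"
  shows "W1set d n (mdiff \<rho> \<tau>) \<noteq> {}"
proof -
  define rs where "rs i = mix (1/2) (Tm d i \<rho>) (Tm d (Suc i) \<tau>)" for i
  define ss where "ss i = mix (1/2) (Tm d (Suc i) \<rho>) (Tm d i \<tau>)" for i
  have st: "qstate d n (Tm d m A)" if "m \<le> n" "qstate d n A" for m A
    using that Tm_psd Tm_trace[OF _ d] unfolding qstate_def by auto
  have "dec d n (mdiff \<rho> \<tau>) (\<lambda>_. 2) rs ss"
    unfolding dec_def
  proof (intro conjI allI impI ballI)
    fix i assume i: "i < n"
    show "qstate d n (rs i)" "qstate d n (ss i)" unfolding rs_def ss_def
      by (intro qstate_mix st; use i r t in simp)+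
    show "ptr1_eq d n i (rs i) (ss i)" unfolding rs_def ss_def
      by (rule ptr1_eq_mix) (auto simp: ptr1_eq_def Tm_ptr[OF d])
  next
    fix x y assume xy: "x \<in> qbasis d n" "y \<in> qbasis d n"
    have "(\<Sum>i<n. complex_of_real 2 * (rs i x y - ss i x y))
        = (\<Sum>i<n. (Tm d i \<rho> x y - Tm d i \<tau> x y) - (Tm d (Suc i) \<rho> x y - Tm d (Suc i) \<tau> x y))"
      unfolding rs_def ss_def mix_def by (intro sum.cong refl) (simp add: algebra_simps)
    also have "\<dots> = (Tm d 0 \<rho> x y - Tm d 0 \<tau> x y) - (Tm d n \<rho> x y - Tm d n \<tau> x y)"
      by (rule sum_lessThan_telescope')
    also have "\<dots> = mdiff \<rho> \<tau> x y"
      using r t unfolding Tm_0 Tm_n[OF xy] mdiff_def qstate_def by simp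
    finally show "mdiff \<rho> \<tau> x y = (\<Sum>i<n. complex_of_real 2 * (rs i x y - ss i x y))" by simp
  qed
  then show ?thesis unfolding W1set_def by blast
qed

lemma ptr1_eq_sym: "ptr1_eq d n i A B \<Longrightarrow> ptr1_eq d n i B A"
  unfolding ptr1_eq_def by simp

lemma sign_norm:
  assumes "qstate d n r" "qstate d n s" "ptr1_eq d n i r s"
  shows "\<exists>r' s'. qstate d n r' \<and> qstate d n s' \<and> ptr1_eq d n i r' s' \<and>
     (\<forall>x y. complex_of_real c * (r x y - s x y) = complex_of_real \<bar>c\<bar> * (r' x y - s' x y))"
proof (cases "c \<ge> 0")
  case True then show ?thesis using assms by (intro exI[of _ r] exI[of _ s]) auto
next
  case False then show ?thesis using assms ptr1_eq_sym
    by (intro exI[of _ s] exI[of _ r]) (auto simp: algebra_simps)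
qed

lemma combine:
  assumes "qstate d n r1" "qstate d n s1" "ptr1_eq d n i r1 s1"
    and "qstate d n r2" "qstate d n s2" "ptr1_eq d n i r2 s2"
  shows "\<exists>R S. qstate d n R \<and> qstate d n S \<and> ptr1_eq d n i R S \<and>
     (\<forall>x y. complex_of_real c1 * (r1 x y - s1 x y) + complex_of_real c2 * (r2 x y - s2 x y)
          = complex_of_real (\<bar>c1\<bar> + \<bar>c2\<bar>) * (R x y - S x y))"
proof -
  obtain r1' s1' where 1: "qstate d n r1'" "qstate d n s1'" "ptr1_eq d n i r1' s1'"
    "\<forall>x y. complex_of_real c1 * (r1 x y - s1 x y) = complex_of_real \<bar>c1\<bar> * (r1' x y - s1' x y)"
    using sign_norm[OF assms(1-3)] by blast
  obtain r2' s2' where 2: "qstate d n r2'" "qstate d n s2'" "ptr1_eq d n i r2' s2'"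
    "\<forall>x y. complex_of_real c2 * (r2 x y - s2 x y) = complex_of_real \<bar>c2\<bar> * (r2' x y - s2' x y)"
    using sign_norm[OF assms(4-6)] by blast
  show ?thesis
  proof (cases "\<bar>c1\<bar> + \<bar>c2\<bar> = 0")
    case True
    then have "c1 = 0" "c2 = 0" by auto
    then show ?thesis using 1 by (intro exI[of _ r1'] exI[of _ r1']) (auto simp: ptr1_eq_def)
  next
    case False
    define C where "C = \<bar>c1\<bar> + \<bar>c2\<bar>"
    define t where "t = \<bar>c1\<bar> / C"
    have Cp: "C > 0" using False unfolding C_def by auto
    have t01: "0 \<le> t" "t \<le> 1" unfolding t_def C_def using Cp C_def by (auto simp: field_simps)
    have ct: "C * t = \<bar>c1\<bar>" "C * (1 - t) = \<bar>c2\<bar>" unfolding t_def using Cp by (auto simp: field_simps C_def)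
    show ?thesis
    proof (rule exI[of _ "mix t r1' r2'"], rule exI[of _ "mix t s1' s2'"], intro conjI allI)
      show "qstate d n (mix t r1' r2')" "qstate d n (mix t s1' s2')"
        using qstate_mix t01 1 2 by auto
      show "ptr1_eq d n i (mix t r1' r2') (mix t s1' s2')" using ptr1_eq_mix 1 2 by auto
      fix x y
      have "complex_of_real C * (mix t r1' r2' x y - mix t s1' s2' x y)
          = complex_of_real (C * t) * (r1' x y - s1' x y) + complex_of_real (C * (1 - t)) * (r2' x y - s2' x y)"
        unfolding mix_def by (simp add: algebra_simps)
      also have "\<dots> = complex_of_real \<bar>c1\<bar> * (r1' x y - s1' x y) + complex_of_real \<bar>c2\<bar> * (r2' x y - s2' x y)"
        by (simp only: ct)
      finally show "complex_of_real c1 * (r1 x y - s1 x y) + complex_of_real c2 * (r2 x y - s2 x y)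
          = complex_of_real (\<bar>c1\<bar> + \<bar>c2\<bar>) * (mix t r1' r2' x y - mix t s1' s2' x y)"
        using 1(4) 2(4) unfolding C_def by simp
    qed
  qed
qed

lemma dec_add:
  assumes "dec d n X1 c1 rs1 ss1" "dec d n X2 c2 rs2 ss2"
    and "\<forall>x\<in>qbasis d n. \<forall>y\<in>qbasis d n. X x y = X1 x y + X2 x y"
  shows "(\<Sum>i<n. \<bar>c1 i\<bar>) + (\<Sum>i<n. \<bar>c2 i\<bar>) \<in> W1set d n X"
proof -
  have "\<forall>i. \<exists>p. i < n \<longrightarrow> (qstate d n (fst p) \<and> qstate d n (snd p) \<and> ptr1_eq d n i (fst p) (snd p) \<and>
     (\<forall>x y. complex_of_real (c1 i) * (rs1 i x y - ss1 i x y) + complex_of_real (c2 i) * (rs2 i x y - ss2 i x y)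
          = complex_of_real (\<bar>c1 i\<bar> + \<bar>c2 i\<bar>) * (fst p x y - snd p x y)))"
  proof
    fix i
    show "\<exists>p. i < n \<longrightarrow> (qstate d n (fst p) \<and> qstate d n (snd p) \<and> ptr1_eq d n i (fst p) (snd p) \<and>
     (\<forall>x y. complex_of_real (c1 i) * (rs1 i x y - ss1 i x y) + complex_of_real (c2 i) * (rs2 i x y - ss2 i x y)
          = complex_of_real (\<bar>c1 i\<bar> + \<bar>c2 i\<bar>) * (fst p x y - snd p x y)))"
    proof (cases "i < n")
      case True
      then obtain R S where "qstate d n R \<and> qstate d n S \<and> ptr1_eq d n i R S \<and>
     (\<forall>x y. complex_of_real (c1 i) * (rs1 i x y - ss1 i x y) + complex_of_real (c2 i) * (rs2 i x y - ss2 i x y)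
          = complex_of_real (\<bar>c1 i\<bar> + \<bar>c2 i\<bar>) * (R x y - S x y))"
        using combine[of d n "rs1 i" "ss1 i" i "rs2 i" "ss2 i" "c1 i" "c2 i"] assms(1,2) unfolding dec_def by blast
      then show ?thesis by (intro exI[of _ "(R,S)"]) simp
    qed simp
  qed
  then obtain P where P: "\<forall>i. i < n \<longrightarrow> (qstate d n (fst (P i)) \<and> qstate d n (snd (P i)) \<and> ptr1_eq d n i (fst (P i)) (snd (P i)) \<and>
     (\<forall>x y. complex_of_real (c1 i) * (rs1 i x y - ss1 i x y) + complex_of_real (c2 i) * (rs2 i x y - ss2 i x y)
          = complex_of_real (\<bar>c1 i\<bar> + \<bar>c2 i\<bar>) * (fst (P i) x y - snd (P i) x y)))"
    by (metis choice)
  define C where "C i = \<bar>c1 i\<bar> + \<bar>c2 i\<bar>" for i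
  have "dec d n X C (\<lambda>i. fst (P i)) (\<lambda>i. snd (P i))"
    unfolding dec_def
  proof (intro conjI allI impI ballI)
    fix i assume "i < n" then show "qstate d n (fst (P i))" "qstate d n (snd (P i))" "ptr1_eq d n i (fst (P i)) (snd (P i))"
      using P by auto
  next
    fix x y assume xy: "x \<in> qbasis d n" "y \<in> qbasis d n"
    have "X x y = (\<Sum>i<n. complex_of_real (c1 i) * (rs1 i x y - ss1 i x y)) + (\<Sum>i<n. complex_of_real (c2 i) * (rs2 i x y - ss2 i x y))"
      using assms xy unfolding dec_def by simp
    also have "\<dots> = (\<Sum>i<n. complex_of_real (C i) * (fst (P i) x y - snd (P i) x y))"
      unfolding sum.distrib[symmetric] C_def using P by (intro sum.cong refl) auto
    finally show "X x y = (\<Sum>i<n. complex_of_real (C i) * (fst (P i) x y - snd (P i) x y))" .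
  qed
  moreover have "(\<Sum>i<n. \<bar>C i\<bar>) = (\<Sum>i<n. \<bar>c1 i\<bar>) + (\<Sum>i<n. \<bar>c2 i\<bar>)"
    unfolding C_def by (simp add: sum.distrib)
  ultimately show ?thesis unfolding W1set_def by (metis (mono_tags, lifting) mem_Collect_eq)
qed

lemma W1_triangle:
  assumes n1: "W1set d n X1 \<noteq> {}" and n2: "W1set d n X2 \<noteq> {}"
    and X: "\<forall>x\<in>qbasis d n. \<forall>y\<in>qbasis d n. X x y = X1 x y + X2 x y"
  shows "W1 d n X \<le> W1 d n X1 + W1 d n X2"
proof -
  have key: "W1 d n X \<le> a + b" if a: "a \<in> W1set d n X1" and b: "b \<in> W1set d n X2" for a b
  proof -
    obtain c1 rs1 ss1 where 1: "a = (\<Sum>i<n. \<bar>c1 i\<bar>)" "dec d n X1 c1 rs1 ss1" using a unfolding W1set_def by blast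
    obtain c2 rs2 ss2 where 2: "b = (\<Sum>i<n. \<bar>c2 i\<bar>)" "dec d n X2 c2 rs2 ss2" using b unfolding W1set_def by blast
    have "a + b \<in> W1set d n X" using dec_add[OF 1(2) 2(2) X] 1(1) 2(1) by simp
    then show ?thesis unfolding W1_eq by (rule cInf_lower[OF _ W1set_bdd])
  qed
  have "W1 d n X - b \<le> W1 d n X1" if b: "b \<in> W1set d n X2" for b
    unfolding W1_eq[of d n X1] using key[OF _ b] by (intro cInf_greatest[OF n1]) (simp add: W1_eq algebra_simps)
  then have "W1 d n X - W1 d n X1 \<le> W1 d n X2"
    unfolding W1_eq[of d n X2] by (intro cInf_greatest[OF n2]) (simp add: W1_eq algebra_simps)
  then show ?thesis by simp
qed

lemma dvd_mod_diff: "(d::int) dvd (x mod d - x)"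
proof -
  have "x mod d - x = - (d * (x div d))" using minus_mod_eq_mult_div[of x d] by simp
  then show ?thesis by simp
qed

lemma mod_from_dvd: "0 \<le> a \<Longrightarrow> a < (d::int) \<Longrightarrow> d dvd (E - a) \<Longrightarrow> E mod d = a"
  by (metis mod_eq_dvd_iff mod_pos_pos_trivial)

lemma inv_exists:
  assumes "prime d" "D mod int d \<noteq> 0"
  shows "\<exists>b. 0 \<le> b \<and> b < int d \<and> (D * b) mod int d = 1"
proof -
  have pd: "prime (int d)" using assms(1) by simp
  have nd: "\<not> int d dvd D" using assms(2) by (simp add: dvd_eq_mod_eq_0)
  have "coprime (int d) D" using prime_imp_coprime[OF pd nd] .
  then have g: "gcd D (int d) = 1" by (simp add: coprime_iff_gcd_eq_1 gcd.commute)
  obtain u v where uv: "u * D + v * int d = 1" using bezout_int[of D "int d"] g by auto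
  have d1: "int d > 1" using prime_gt_1_nat[OF assms(1)] by simp
  have "(D * (u mod int d)) mod int d = (D * u) mod int d" by (simp add: mod_mult_right_eq)
  also have "D * u = 1 + int d * (- v)" using uv by (simp add: algebra_simps)
  also have "(1 + int d * (- v)) mod int d = 1" using d1 by (intro mod_from_dvd) auto
  finally show ?thesis using d1 by (intro exI[of _ "u mod int d"]) auto
qed

locale cs =
  fixes d n :: nat and g00 g01 g10 g11 :: int
  assumes pr: "prime d" and det: "det2 g00 g01 g10 g11 mod int d \<noteq> 0"
begin

definition "D = det2 g00 g01 g10 g11"
definition "N = inv_modd d D"

lemma dpos: "d > 0" using prime_gt_0_nat[OF pr] .
lemma d1: "int d > 1" using prime_gt_1_nat[OF pr] by simp

lemma N_prop: "(D * N) mod int d = 1"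
proof -
  have "\<exists>b. 0 \<le> b \<and> b < int d \<and> (D * b) mod int d = 1" using inv_exists[OF pr det] unfolding D_def .
  then have "0 \<le> N \<and> N < int d \<and> (D * N) mod int d = 1" unfolding N_def inv_modd_def by (rule someI_ex)
  then show ?thesis by simp
qed

lemma DN_dvd: "int d dvd (D * N - 1)"
  using N_prop d1 by (metis mod_eq_dvd_iff mod_pos_pos_trivial zero_le_one)

definition hm :: "(nat \<Rightarrow> nat) \<times> (nat \<Rightarrow> nat) \<Rightarrow> (nat \<Rightarrow> nat) \<times> (nat \<Rightarrow> nat)" where
  "hm p = (lincomb d g00 g10 (fst p) (snd p), lincomb d g01 g11 (fst p) (snd p))"

abbreviation "UM \<equiv> Umap d g00 g01 g10 g11"

lemma Umap_eq: "UM p = (lincomb d (N * g11) (- N * g10) (fst p) (snd p),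
        lincomb d (- N * g01) (N * g00) (fst p) (snd p))"
  unfolding Umap_def N_def D_def Let_def ..

lemma int_comp1:
  assumes "0 \<le> a" "a < int d"
  shows "(N * g11 * ((g00 * a + g10 * b) mod int d) + - N * g10 * ((g01 * a + g11 * b) mod int d)) mod int d = a"
proof (rule mod_from_dvd[OF assms])
  have "N * g11 * ((g00 * a + g10 * b) mod int d) + - N * g10 * ((g01 * a + g11 * b) mod int d) - a
     = N * g11 * (((g00 * a + g10 * b) mod int d) - (g00 * a + g10 * b))
       - N * g10 * (((g01 * a + g11 * b) mod int d) - (g01 * a + g11 * b)) + (D * N - 1) * a"
    unfolding D_def det2_def by (simp add: algebra_simps)
  then show "int d dvd (N * g11 * ((g00 * a + g10 * b) mod int d) + - N * g10 * ((g01 * a + g11 * b) mod int d) - a)"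
    by (simp add: dvd_mod_diff DN_dvd)
qed

lemma int_comp2:
  assumes "0 \<le> b" "b < int d"
  shows "(- N * g01 * ((g00 * a + g10 * b) mod int d) + N * g00 * ((g01 * a + g11 * b) mod int d)) mod int d = b"
proof (rule mod_from_dvd[OF assms])
  have "- N * g01 * ((g00 * a + g10 * b) mod int d) + N * g00 * ((g01 * a + g11 * b) mod int d) - b
     = - N * g01 * (((g00 * a + g10 * b) mod int d) - (g00 * a + g10 * b))
       + N * g00 * (((g01 * a + g11 * b) mod int d) - (g01 * a + g11 * b)) + (D * N - 1) * b"
    unfolding D_def det2_def by (simp add: algebra_simps)
  then show "int d dvd (- N * g01 * ((g00 * a + g10 * b) mod int d) + N * g00 * ((g01 * a + g11 * b) mod int d) - b)"
    by (simp add: dvd_mod_diff DN_dvd)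
qed

lemma int_comp3:
  assumes "0 \<le> i" "i < int d"
  shows "(g00 * ((N * g11 * i + - N * g10 * j) mod int d) + g10 * ((- N * g01 * i + N * g00 * j) mod int d)) mod int d = i"
proof (rule mod_from_dvd[OF assms])
  have "g00 * ((N * g11 * i + - N * g10 * j) mod int d) + g10 * ((- N * g01 * i + N * g00 * j) mod int d) - i
     = g00 * (((N * g11 * i + - N * g10 * j) mod int d) - (N * g11 * i + - N * g10 * j))
       + g10 * (((- N * g01 * i + N * g00 * j) mod int d) - (- N * g01 * i + N * g00 * j)) + (D * N - 1) * i"
    unfolding D_def det2_def by (simp add: algebra_simps)
  then show "int d dvd (g00 * ((N * g11 * i + - N * g10 * j) mod int d) + g10 * ((- N * g01 * i + N * g00 * j) mod int d) - i)"
    by (simp add: dvd_mod_diff DN_dvd)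
qed

lemma int_comp4:
  assumes "0 \<le> j" "j < int d"
  shows "(g01 * ((N * g11 * i + - N * g10 * j) mod int d) + g11 * ((- N * g01 * i + N * g00 * j) mod int d)) mod int d = j"
proof (rule mod_from_dvd[OF assms])
  have "g01 * ((N * g11 * i + - N * g10 * j) mod int d) + g11 * ((- N * g01 * i + N * g00 * j) mod int d) - j
     = g01 * (((N * g11 * i + - N * g10 * j) mod int d) - (N * g11 * i + - N * g10 * j))
       + g11 * (((- N * g01 * i + N * g00 * j) mod int d) - (- N * g01 * i + N * g00 * j)) + (D * N - 1) * j"
    unfolding D_def det2_def by (simp add: algebra_simps)
  then show "int d dvd (g01 * ((N * g11 * i + - N * g10 * j) mod int d) + g11 * ((- N * g01 * i + N * g00 * j) mod int d) - j)"
    by (simp add: dvd_mod_diff DN_dvd)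
qed

end

context cs begin

abbreviation "Q \<equiv> qbasis d n"
abbreviation "S2 \<equiv> qbasis d n \<times> qbasis d n"

lemma nat_mod_lt: "nat (x mod int d) < d"
  using dpos by (simp add: nat_less_iff)

lemma int_nat_mod: "int (nat (x mod int d)) = x mod int d"
  using dpos by simp

lemma lincomb_in: "i \<in> Q \<Longrightarrow> j \<in> Q \<Longrightarrow> lincomb d a b i j \<in> Q"
  unfolding qbasis_def lincomb_def using nat_mod_lt by auto

lemma hm_in: "p \<in> S2 \<Longrightarrow> hm p \<in> S2"
  unfolding hm_def by (cases p) (auto intro: lincomb_in)

lemma UM_in: "p \<in> S2 \<Longrightarrow> UM p \<in> S2"
  unfolding Umap_eq by (cases p) (auto intro: lincomb_in)

lemma Umap_hm:
  assumes "p \<in> S2" shows "UM (hm p) = p"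
proof -
  obtain a b where p: "p = (a,b)" "a \<in> Q" "b \<in> Q" using assms by auto
  have a: "0 \<le> int (a k)" "int (a k) < int d" for k
  proof -
    have "a k < d" by (cases "k < n") (use p(2) dpos in \<open>auto simp: qbasis_def\<close>)
    then show "0 \<le> int (a k)" "int (a k) < int d" by auto
  qed
  have b: "0 \<le> int (b k)" "int (b k) < int d" for k
  proof -
    have "b k < d" by (cases "k < n") (use p(3) dpos in \<open>auto simp: qbasis_def\<close>)
    then show "0 \<le> int (b k)" "int (b k) < int d" by auto
  qed
  show ?thesis unfolding Umap_eq hm_def p
    unfolding fst_conv snd_conv lincomb_def int_nat_mod int_comp1[OF a] int_comp2[OF b] nat_int by simp
qed

lemma hm_Umap:
  assumes "p \<in> S2" shows "hm (UM p) = p"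
proof -
  obtain a b where p: "p = (a,b)" "a \<in> Q" "b \<in> Q" using assms by auto
  have a: "0 \<le> int (a k)" "int (a k) < int d" for k
  proof -
    have "a k < d" by (cases "k < n") (use p(2) dpos in \<open>auto simp: qbasis_def\<close>)
    then show "0 \<le> int (a k)" "int (a k) < int d" by auto
  qed
  have b: "0 \<le> int (b k)" "int (b k) < int d" for k
  proof -
    have "b k < d" by (cases "k < n") (use p(3) dpos in \<open>auto simp: qbasis_def\<close>)
    then show "0 \<le> int (b k)" "int (b k) < int d" by auto
  qed
  show ?thesis unfolding Umap_eq hm_def p
    unfolding fst_conv snd_conv lincomb_def int_nat_mod int_comp3[OF a] int_comp4[OF b] nat_int by simp
qed

lemma sum_U:
  assumes "p \<in> S2"
  shows "(\<Sum>z\<in>S2. (if p = UM z then 1 else 0) * F z) = (F (hm p) :: complex)"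
proof -
  have "(\<Sum>z\<in>S2. (if p = UM z then 1 else 0) * F z) = (\<Sum>z\<in>S2. if hm p = z then F z else 0)"
  proof (rule sum.cong[OF refl])
    fix z assume z: "z \<in> S2"
    have "(p = UM z) = (hm p = z)" using Umap_hm[OF assms] hm_Umap[OF z] by metis
    then show "(if p = UM z then 1 else 0) * F z = (if hm p = z then F z else 0)" by simp
  qed
  also have "\<dots> = F (hm p)" using hm_in[OF assms] by (simp add: sum.delta' finite_qbasis)
  finally show ?thesis .
qed

lemma conj_formula:
  assumes "p \<in> S2" "q \<in> S2"
  shows "mmul S2 (mmul S2 (Umat d g00 g01 g10 g11) T) (adj (Umat d g00 g01 g10 g11)) p q = T (hm p) (hm q)"
proof -
  have "mmul S2 (mmul S2 (Umat d g00 g01 g10 g11) T) (adj (Umat d g00 g01 g10 g11)) p q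
      = (\<Sum>z\<in>S2. (if q = UM z then 1 else 0) * T (hm p) z)"
  proof -
    have i: "(\<Sum>w\<in>S2. (if p = UM w then 1 else 0) * T w z) = T (hm p) z" for z
      by (rule sum_U[OF assms(1)])
    show ?thesis unfolding mmul_def adj_def Umat_def i
      by (intro sum.cong refl) (simp add: mult.commute)
  qed
  also have "\<dots> = T (hm p) (hm q)" by (rule sum_U[OF assms(2)])
  finally show ?thesis .
qed

lemma qconv_formula:
  assumes "a \<in> Q" "a' \<in> Q"
  shows "qconv d n g00 g01 g10 g11 A B a a' = (\<Sum>b\<in>Q. tensor A B (hm (a,b)) (hm (a',b)))"
  unfolding qconv_def Let_def ptrB_def using assms by (intro sum.cong refl) (simp add: conj_formula)

end

lemma psd_compose2:
  assumes fin: "finite S" and fin': "finite S'" and P: "psd S' A" and g: "g ` S \<subseteq> S'"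
  shows "psd S (\<lambda>x y. A (g x) (g y))"
proof -
  have "qf S (\<lambda>x y. A (g x) (g y)) v = qf S' A (\<lambda>p. \<Sum>x\<in>{x\<in>S. g x = p}. v x)" for v
  proof -
    have "qf S' A (\<lambda>p. \<Sum>x\<in>{x\<in>S. g x = p}. v x)
        = (\<Sum>p\<in>S'. \<Sum>q\<in>S'. \<Sum>y\<in>{y\<in>S. g y = q}. \<Sum>x\<in>{x\<in>S. g x = p}. cnj (v x) * A p q * v y)"
      unfolding qf_def by (simp add: sum_distrib_left sum_distrib_right cnj_sum)
    also have "\<dots> = (\<Sum>p\<in>S'. \<Sum>q\<in>S'. \<Sum>y\<in>{y\<in>S. g y = q}. \<Sum>x\<in>{x\<in>S. g x = p}. cnj (v x) * A (g x) (g y) * v y)"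
      by (intro sum.cong refl) auto
    also have "\<dots> = (\<Sum>p\<in>S'. \<Sum>q\<in>S'. \<Sum>x\<in>{x\<in>S. g x = p}. \<Sum>y\<in>{y\<in>S. g y = q}. cnj (v x) * A (g x) (g y) * v y)"
      by (rule sum.cong[OF refl], rule sum.cong[OF refl], rule sum.swap)
    also have "\<dots> = (\<Sum>p\<in>S'. \<Sum>x\<in>{x\<in>S. g x = p}. \<Sum>q\<in>S'. \<Sum>y\<in>{y\<in>S. g y = q}. cnj (v x) * A (g x) (g y) * v y)"
      by (rule sum.cong[OF refl], rule sum.swap)
    also have "\<dots> = (\<Sum>x\<in>S. \<Sum>q\<in>S'. \<Sum>y\<in>{y\<in>S. g y = q}. cnj (v x) * A (g x) (g y) * v y)"
      by (rule sum.group[OF fin fin' g])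
    also have "\<dots> = (\<Sum>x\<in>S. \<Sum>y\<in>S. cnj (v x) * A (g x) (g y) * v y)"
      by (intro sum.cong refl sum.group[OF fin fin' g])
    finally show ?thesis unfolding qf_def by simp
  qed
  then show ?thesis using P unfolding psd_qf by simp
qed

context cs begin

lemma hm_bij: "bij_betw hm S2 S2"
proof (rule bij_betw_byWitness[of S2 UM])
  show "\<forall>a\<in>S2. UM (hm a) = a" using Umap_hm by blast
  show "\<forall>a\<in>S2. hm (UM a) = a" using hm_Umap by blast
  show "hm ` S2 \<subseteq> S2" by (rule image_subsetI, rule hm_in)
  show "UM ` S2 \<subseteq> S2" by (rule image_subsetI, rule UM_in)
qed

lemma qconv_state:
  assumes A: "qstate d n A" and B: "qstate d n B"
  shows "qstate d n (qconv d n g00 g01 g10 g11 A B)"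
proof -
  have fQ: "finite Q" by (rule finite_qbasis)
  have T: "psd S2 (tensor A B)" using psd_tensor[OF fQ fQ] A B unfolding qstate_def by blast
  have "psd Q (\<lambda>a a'. \<Sum>b\<in>Q. tensor A B (hm (a,b)) (hm (a',b)))"
  proof (rule psd_sum)
    fix b assume b: "b \<in> Q"
    show "psd Q (\<lambda>a a'. tensor A B (hm (a,b)) (hm (a',b)))"
      by (rule psd_compose2[OF fQ _ T, of "\<lambda>a. hm (a,b)"])
         (simp add: fQ, rule image_subsetI, rule hm_in, use b in simp)
  qed
  then have P: "psd Q (qconv d n g00 g01 g10 g11 A B)"
    by (subst psd_cong[OF qconv_formula]) auto
  have "mtrace Q (qconv d n g00 g01 g10 g11 A B) = (\<Sum>a\<in>Q. \<Sum>b\<in>Q. tensor A B (hm (a,b)) (hm (a,b)))"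
    unfolding mtrace_def by (intro sum.cong refl) (simp add: qconv_formula)
  also have "\<dots> = (\<Sum>p\<in>S2. tensor A B (hm p) (hm p))"
    by (simp add: sum.cartesian_product)
  also have "\<dots> = (\<Sum>p\<in>S2. tensor A B p p)"
    using sum.reindex_bij_betw[OF hm_bij, of "\<lambda>p. tensor A B p p"] .
  also have "\<dots> = mtrace Q A * mtrace Q B"
    unfolding tensor_def mtrace_def by (simp add: sum.cartesian_product split_def sum_product)
  finally show ?thesis using P A B unfolding qstate_def by simp
qed

abbreviation "h1 a b \<equiv> lincomb d g00 g10 a b"
abbreviation "h2 a b \<equiv> lincomb d g01 g11 a b"

lemma qconv_formula':
  assumes "a \<in> Q" "a' \<in> Q"
  shows "qconv d n g00 g01 g10 g11 A B a a' = (\<Sum>b\<in>Q. A (h1 a b) (h1 a' b) * B (h2 a b) (h2 a' b))"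
  unfolding qconv_formula[OF assms] tensor_def hm_def by simp

lemma conv_lin2:
  assumes X: "\<forall>x\<in>Q. \<forall>y\<in>Q. B1 x y - B2 x y = (\<Sum>i<n. complex_of_real (c i) * (R i x y - S i x y))"
    and a: "a \<in> Q" "a' \<in> Q"
  shows "qconv d n g00 g01 g10 g11 A B1 a a' - qconv d n g00 g01 g10 g11 A B2 a a'
     = (\<Sum>i<n. complex_of_real (c i) * (qconv d n g00 g01 g10 g11 A (R i) a a' - qconv d n g00 g01 g10 g11 A (S i) a a'))"
proof -
  have "qconv d n g00 g01 g10 g11 A B1 a a' - qconv d n g00 g01 g10 g11 A B2 a a'
      = (\<Sum>b\<in>Q. A (h1 a b) (h1 a' b) * (B1 (h2 a b) (h2 a' b) - B2 (h2 a b) (h2 a' b)))"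
    unfolding qconv_formula'[OF a] by (simp add: sum_subtractf algebra_simps)
  also have "\<dots> = (\<Sum>b\<in>Q. \<Sum>i<n. complex_of_real (c i) * (A (h1 a b) (h1 a' b) * (R i (h2 a b) (h2 a' b) - S i (h2 a b) (h2 a' b))))"
    using X a lincomb_in by (intro sum.cong refl) (simp add: sum_distrib_left algebra_simps)
  also have "\<dots> = (\<Sum>i<n. complex_of_real (c i) * (\<Sum>b\<in>Q. A (h1 a b) (h1 a' b) * (R i (h2 a b) (h2 a' b) - S i (h2 a b) (h2 a' b))))"
    by (subst sum.swap) (simp add: sum_distrib_left)
  also have "\<dots> = (\<Sum>i<n. complex_of_real (c i) * (qconv d n g00 g01 g10 g11 A (R i) a a' - qconv d n g00 g01 g10 g11 A (S i) a a'))"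
    unfolding qconv_formula'[OF a] by (simp add: sum_subtractf algebra_simps)
  finally show ?thesis .
qed

lemma conv_lin1:
  assumes X: "\<forall>x\<in>Q. \<forall>y\<in>Q. B1 x y - B2 x y = (\<Sum>i<n. complex_of_real (c i) * (R i x y - S i x y))"
    and a: "a \<in> Q" "a' \<in> Q"
  shows "qconv d n g00 g01 g10 g11 B1 A a a' - qconv d n g00 g01 g10 g11 B2 A a a'
     = (\<Sum>i<n. complex_of_real (c i) * (qconv d n g00 g01 g10 g11 (R i) A a a' - qconv d n g00 g01 g10 g11 (S i) A a a'))"
proof -
  have "qconv d n g00 g01 g10 g11 B1 A a a' - qconv d n g00 g01 g10 g11 B2 A a a'
      = (\<Sum>b\<in>Q. A (h2 a b) (h2 a' b) * (B1 (h1 a b) (h1 a' b) - B2 (h1 a b) (h1 a' b)))"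
    unfolding qconv_formula'[OF a] by (simp add: sum_subtractf algebra_simps)
  also have "\<dots> = (\<Sum>b\<in>Q. \<Sum>i<n. complex_of_real (c i) * (A (h2 a b) (h2 a' b) * (R i (h1 a b) (h1 a' b) - S i (h1 a b) (h1 a' b))))"
    using X a lincomb_in by (intro sum.cong refl) (simp add: sum_distrib_left algebra_simps)
  also have "\<dots> = (\<Sum>i<n. complex_of_real (c i) * (\<Sum>b\<in>Q. A (h2 a b) (h2 a' b) * (R i (h1 a b) (h1 a' b) - S i (h1 a b) (h1 a' b))))"
    by (subst sum.swap) (simp add: sum_distrib_left)
  also have "\<dots> = (\<Sum>i<n. complex_of_real (c i) * (qconv d n g00 g01 g10 g11 (R i) A a a' - qconv d n g00 g01 g10 g11 (S i) A a a'))"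
    unfolding qconv_formula'[OF a] by (simp add: sum_subtractf algebra_simps)
  finally show ?thesis .
qed

end

context cs begin

lemma small_dvd_zero:
  assumes "int d dvd u" "\<bar>u\<bar> < int d" shows "u = 0"
proof (rule ccontr)
  assume "u \<noteq> 0"
  then have "\<bar>int d\<bar> \<le> \<bar>u\<bar>" using dvd_imp_le_int[of u "int d"] assms(1) by blast
  then show False using assms(2) by simp
qed

lemma D_not_dvd: "\<not> int d dvd D"
  using det unfolding D_def by (simp add: dvd_eq_mod_eq_0)

lemma prime_cancel: "int d dvd D * u \<Longrightarrow> int d dvd u"
  using prime_dvd_mult_iff[of "int d" D u] pr D_not_dvd by simp

definition pm :: "nat \<times> nat \<Rightarrow> nat \<times> nat" where
  "pm p = (nat ((g00 * int (fst p) + g10 * int (snd p)) mod int d), nat ((g01 * int (fst p) + g11 * int (snd p)) mod int d))"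

lemma nat_mod_eq: "nat (X mod int d) = nat (Y mod int d) \<Longrightarrow> int d dvd (X - Y)"
proof -
  assume "nat (X mod int d) = nat (Y mod int d)"
  then have "int (nat (X mod int d)) = int (nat (Y mod int d))" by simp
  then have "X mod int d = Y mod int d" by (simp only: int_nat_mod)
  then show ?thesis by (simp add: mod_eq_dvd_iff)
qed

lemma pm_inj: "inj_on pm ({..<d} \<times> {..<d})"
proof (rule inj_onI)
  fix p q assume p: "p \<in> {..<d} \<times> {..<d}" and q: "q \<in> {..<d} \<times> {..<d}" and e: "pm p = pm q"
  obtain j l j' l' where pq: "p = (j,l)" "q = (j',l')" by (cases p, cases q) auto
  define u where "u = int j - int j'"
  define w where "w = int l - int l'"
  have e1: "int d dvd (g00 * u + g10 * w)"
    using nat_mod_eq[of "g00 * int j + g10 * int l" "g00 * int j' + g10 * int l'"] e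
    unfolding pm_def pq u_def w_def by (simp add: algebra_simps)
  have e2: "int d dvd (g01 * u + g11 * w)"
    using nat_mod_eq[of "g01 * int j + g11 * int l" "g01 * int j' + g11 * int l'"] e
    unfolding pm_def pq u_def w_def by (simp add: algebra_simps)
  have "D * u = g11 * (g00 * u + g10 * w) - g10 * (g01 * u + g11 * w)"
    unfolding D_def det2_def by (simp add: algebra_simps)
  then have "int d dvd D * u" using e1 e2 by (simp add: dvd_diff)
  then have du: "int d dvd u" by (rule prime_cancel)
  have "\<bar>u\<bar> < int d" using p q pq unfolding u_def by auto
  then have "u = 0" using small_dvd_zero[OF du] by simp
  have "D * w = g00 * (g01 * u + g11 * w) - g01 * (g00 * u + g10 * w)"
    unfolding D_def det2_def by (simp add: algebra_simps)
  then have "int d dvd D * w" using e1 e2 by (simp add: dvd_diff)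
  then have dw: "int d dvd w" by (rule prime_cancel)
  have "\<bar>w\<bar> < int d" using p q pq unfolding w_def by auto
  then have "w = 0" using small_dvd_zero[OF dw] by simp
  show "p = q" using \<open>u = 0\<close> \<open>w = 0\<close> pq unfolding u_def w_def by simp
qed

lemma pm_bij: "bij_betw pm ({..<d} \<times> {..<d}) ({..<d} \<times> {..<d})"
proof -
  have sub: "pm ` ({..<d} \<times> {..<d}) \<subseteq> {..<d} \<times> {..<d}"
    unfolding pm_def using nat_mod_lt by auto
  show ?thesis unfolding bij_betw_def using pm_inj endo_inj_surj[OF _ sub pm_inj] by simp
qed

lemma lincomb_upd: "lincomb d x y (a(i:=j)) (b(i:=l)) = (lincomb d x y a b)(i := nat ((x * int j + y * int l) mod int d))"
  unfolding lincomb_def by (auto simp: fun_eq_iff)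

lemma upd_in: "a \<in> Q \<Longrightarrow> i < n \<Longrightarrow> j < d \<Longrightarrow> a(i:=j) \<in> Q"
  unfolding qbasis_def by auto

lemma ptr_conv:
  assumes i: "i < n" and a: "a \<in> Q" "a' \<in> Q"
  shows "ptr1 d i (qconv d n g00 g01 g10 g11 A B) a a'
    = (\<Sum>b\<in>{b\<in>Q. b i = 0}. \<Sum>p<d. \<Sum>q<d. A ((h1 a b)(i:=p)) ((h1 a' b)(i:=p)) * B ((h2 a b)(i:=q)) ((h2 a' b)(i:=q)))"
proof -
  define G where "G b pq = A ((h1 a b)(i:=fst pq)) ((h1 a' b)(i:=fst pq)) * B ((h2 a b)(i:=snd pq)) ((h2 a' b)(i:=snd pq))" for b pq
  have "ptr1 d i (qconv d n g00 g01 g10 g11 A B) a a'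
      = (\<Sum>j<d. \<Sum>b\<in>Q. A (h1 (a(i:=j)) b) (h1 (a'(i:=j)) b) * B (h2 (a(i:=j)) b) (h2 (a'(i:=j)) b))"
    unfolding ptr1_def using upd_in[OF a(1) i] upd_in[OF a(2) i] by (intro sum.cong refl) (simp add: qconv_formula')
  also have "\<dots> = (\<Sum>j<d. \<Sum>b\<in>{b\<in>Q. b i = 0}. \<Sum>l<d. G b (pm (j,l)))"
    unfolding sum_split_coord[OF i] G_def pm_def lincomb_upd by simp
  also have "\<dots> = (\<Sum>b\<in>{b\<in>Q. b i = 0}. \<Sum>j<d. \<Sum>l<d. G b (pm (j,l)))"
    by (rule sum.swap)
  also have "\<dots> = (\<Sum>b\<in>{b\<in>Q. b i = 0}. \<Sum>pq\<in>{..<d} \<times> {..<d}. G b pq)"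
  proof (rule sum.cong[OF refl])
    fix b
    have "(\<Sum>j<d. \<Sum>l<d. G b (pm (j,l))) = (\<Sum>jl\<in>{..<d} \<times> {..<d}. G b (pm jl))"
      by (simp add: sum.cartesian_product split_def)
    also have "\<dots> = (\<Sum>pq\<in>{..<d} \<times> {..<d}. G b pq)"
      using sum.reindex_bij_betw[OF pm_bij, of "G b"] .
    finally show "(\<Sum>j<d. \<Sum>l<d. G b (pm (j,l))) = (\<Sum>pq\<in>{..<d} \<times> {..<d}. G b pq)" .
  qed
  also have "\<dots> = (\<Sum>b\<in>{b\<in>Q. b i = 0}. \<Sum>p<d. \<Sum>q<d. A ((h1 a b)(i:=p)) ((h1 a' b)(i:=p)) * B ((h2 a b)(i:=q)) ((h2 a' b)(i:=q)))"
    unfolding G_def by (simp add: sum.cartesian_product split_def)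
  finally show ?thesis .
qed

lemma ptr_conv2:
  assumes i: "i < n" and P: "ptr1_eq d n i B1 B2"
  shows "ptr1_eq d n i (qconv d n g00 g01 g10 g11 A B1) (qconv d n g00 g01 g10 g11 A B2)"
  unfolding ptr1_eq_def
proof (intro ballI)
  fix a a' assume a: "a \<in> Q" "a' \<in> Q"
  have e: "(\<Sum>q<d. B1 ((h2 a b)(i:=q)) ((h2 a' b)(i:=q))) = (\<Sum>q<d. B2 ((h2 a b)(i:=q)) ((h2 a' b)(i:=q)))"
    if b: "b \<in> {b\<in>Q. b i = 0}" for b
  proof -
    have "h2 a b \<in> Q" "h2 a' b \<in> Q" using lincomb_in a b by auto
    then have "ptr1 d i B1 (h2 a b) (h2 a' b) = ptr1 d i B2 (h2 a b) (h2 a' b)"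
      using P unfolding ptr1_eq_def by blast
    then show ?thesis unfolding ptr1_def .
  qed
  show "ptr1 d i (qconv d n g00 g01 g10 g11 A B1) a a' = ptr1 d i (qconv d n g00 g01 g10 g11 A B2) a a'"
    unfolding ptr_conv[OF i a] using e by (simp add: sum_distrib_left[symmetric])
qed

lemma ptr_conv1:
  assumes i: "i < n" and P: "ptr1_eq d n i B1 B2"
  shows "ptr1_eq d n i (qconv d n g00 g01 g10 g11 B1 A) (qconv d n g00 g01 g10 g11 B2 A)"
  unfolding ptr1_eq_def
proof (intro ballI)
  fix a a' assume a: "a \<in> Q" "a' \<in> Q"
  have e: "(\<Sum>p<d. B1 ((h1 a b)(i:=p)) ((h1 a' b)(i:=p))) = (\<Sum>p<d. B2 ((h1 a b)(i:=p)) ((h1 a' b)(i:=p)))"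
    if b: "b \<in> {b\<in>Q. b i = 0}" for b
  proof -
    have "h1 a b \<in> Q" "h1 a' b \<in> Q" using lincomb_in a b by auto
    then have "ptr1 d i B1 (h1 a b) (h1 a' b) = ptr1 d i B2 (h1 a b) (h1 a' b)"
      using P unfolding ptr1_eq_def by blast
    then show ?thesis unfolding ptr1_def .
  qed
  have sw: "(\<Sum>p<d. \<Sum>q<d. B ((h1 a b)(i:=p)) ((h1 a' b)(i:=p)) * A ((h2 a b)(i:=q)) ((h2 a' b)(i:=q)))
      = (\<Sum>q<d. A ((h2 a b)(i:=q)) ((h2 a' b)(i:=q)) * (\<Sum>p<d. B ((h1 a b)(i:=p)) ((h1 a' b)(i:=p))))" for B b
    by (subst sum.swap) (simp add: sum_distrib_left mult.commute)
  show "ptr1 d i (qconv d n g00 g01 g10 g11 B1 A) a a' = ptr1 d i (qconv d n g00 g01 g10 g11 B2 A) a a'"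
    unfolding ptr_conv[OF i a] sw using e by simp
qed

end

context cs begin

lemma part1:
  assumes s: "qstate d n \<sigma>" and r: "qstate d n \<rho>" and t: "qstate d n \<tau>"
  shows "W1 d n (mdiff (qconv d n g00 g01 g10 g11 \<sigma> \<rho>) (qconv d n g00 g01 g10 g11 \<sigma> \<tau>)) \<le> W1 d n (mdiff \<rho> \<tau>)"
proof (rule W1_mono[OF W1set_nonempty[OF dpos r t]])
  show "W1set d n (mdiff \<rho> \<tau>) \<subseteq> W1set d n (mdiff (qconv d n g00 g01 g10 g11 \<sigma> \<rho>) (qconv d n g00 g01 g10 g11 \<sigma> \<tau>))"
  proof
    fix x assume "x \<in> W1set d n (mdiff \<rho> \<tau>)"
    then obtain c rs ss where x: "x = (\<Sum>i<n. \<bar>c i\<bar>)" and D: "dec d n (mdiff \<rho> \<tau>) c rs ss"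
      unfolding W1set_def by blast
    have "dec d n (mdiff (qconv d n g00 g01 g10 g11 \<sigma> \<rho>) (qconv d n g00 g01 g10 g11 \<sigma> \<tau>)) c
       (\<lambda>i. qconv d n g00 g01 g10 g11 \<sigma> (rs i)) (\<lambda>i. qconv d n g00 g01 g10 g11 \<sigma> (ss i))"
      unfolding dec_def
    proof (intro conjI allI impI ballI)
      fix i assume i: "i < n"
      have Di: "qstate d n (rs i)" "qstate d n (ss i)" "ptr1_eq d n i (rs i) (ss i)"
        using D i unfolding dec_def by auto
      show "qstate d n (qconv d n g00 g01 g10 g11 \<sigma> (rs i))" "qstate d n (qconv d n g00 g01 g10 g11 \<sigma> (ss i))"
        by (rule qconv_state; fact)+
      show "ptr1_eq d n i (qconv d n g00 g01 g10 g11 \<sigma> (rs i)) (qconv d n g00 g01 g10 g11 \<sigma> (ss i))"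
        by (rule ptr_conv2[OF i Di(3)])
    next
      fix a a' assume a: "a \<in> Q" "a' \<in> Q"
      have X: "\<forall>x\<in>Q. \<forall>y\<in>Q. \<rho> x y - \<tau> x y = (\<Sum>i<n. complex_of_real (c i) * (rs i x y - ss i x y))"
        using D unfolding dec_def mdiff_def by simp
      show "mdiff (qconv d n g00 g01 g10 g11 \<sigma> \<rho>) (qconv d n g00 g01 g10 g11 \<sigma> \<tau>) a a'
          = (\<Sum>i<n. complex_of_real (c i) * (qconv d n g00 g01 g10 g11 \<sigma> (rs i) a a' - qconv d n g00 g01 g10 g11 \<sigma> (ss i) a a'))"
        unfolding mdiff_def by (rule conv_lin2[OF X a])
    qed
    then show "x \<in> W1set d n (mdiff (qconv d n g00 g01 g10 g11 \<sigma> \<rho>) (qconv d n g00 g01 g10 g11 \<sigma> \<tau>))"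
      unfolding W1set_def x by blast
  qed
qed

lemma part2:
  assumes s: "qstate d n \<sigma>" and r: "qstate d n \<rho>" and t: "qstate d n \<tau>"
  shows "W1 d n (mdiff (qconv d n g00 g01 g10 g11 \<rho> \<sigma>) (qconv d n g00 g01 g10 g11 \<tau> \<sigma>)) \<le> W1 d n (mdiff \<rho> \<tau>)"
proof (rule W1_mono[OF W1set_nonempty[OF dpos r t]])
  show "W1set d n (mdiff \<rho> \<tau>) \<subseteq> W1set d n (mdiff (qconv d n g00 g01 g10 g11 \<rho> \<sigma>) (qconv d n g00 g01 g10 g11 \<tau> \<sigma>))"
  proof
    fix x assume "x \<in> W1set d n (mdiff \<rho> \<tau>)"
    then obtain c rs ss where x: "x = (\<Sum>i<n. \<bar>c i\<bar>)" and D: "dec d n (mdiff \<rho> \<tau>) c rs ss"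
      unfolding W1set_def by blast
    have "dec d n (mdiff (qconv d n g00 g01 g10 g11 \<rho> \<sigma>) (qconv d n g00 g01 g10 g11 \<tau> \<sigma>)) c
       (\<lambda>i. qconv d n g00 g01 g10 g11 (rs i) \<sigma>) (\<lambda>i. qconv d n g00 g01 g10 g11 (ss i) \<sigma>)"
      unfolding dec_def
    proof (intro conjI allI impI ballI)
      fix i assume i: "i < n"
      have Di: "qstate d n (rs i)" "qstate d n (ss i)" "ptr1_eq d n i (rs i) (ss i)"
        using D i unfolding dec_def by auto
      show "qstate d n (qconv d n g00 g01 g10 g11 (rs i) \<sigma>)" "qstate d n (qconv d n g00 g01 g10 g11 (ss i) \<sigma>)"
        by (rule qconv_state; fact)+
      show "ptr1_eq d n i (qconv d n g00 g01 g10 g11 (rs i) \<sigma>) (qconv d n g00 g01 g10 g11 (ss i) \<sigma>)"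
        by (rule ptr_conv1[OF i Di(3)])
    next
      fix a a' assume a: "a \<in> Q" "a' \<in> Q"
      have X: "\<forall>x\<in>Q. \<forall>y\<in>Q. \<rho> x y - \<tau> x y = (\<Sum>i<n. complex_of_real (c i) * (rs i x y - ss i x y))"
        using D unfolding dec_def mdiff_def by simp
      show "mdiff (qconv d n g00 g01 g10 g11 \<rho> \<sigma>) (qconv d n g00 g01 g10 g11 \<tau> \<sigma>) a a'
          = (\<Sum>i<n. complex_of_real (c i) * (qconv d n g00 g01 g10 g11 (rs i) \<sigma> a a' - qconv d n g00 g01 g10 g11 (ss i) \<sigma> a a'))"
        unfolding mdiff_def by (rule conv_lin1[OF X a])
    qed
    then show "x \<in> W1set d n (mdiff (qconv d n g00 g01 g10 g11 \<rho> \<sigma>) (qconv d n g00 g01 g10 g11 \<tau> \<sigma>))"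
      unfolding W1set_def x by blast
  qed
qed

lemma part3:
  assumes "qstate d n \<rho>1" "qstate d n \<rho>2" "qstate d n \<sigma>1" "qstate d n \<sigma>2"
  shows "W1 d n (mdiff (qconv d n g00 g01 g10 g11 \<rho>1 \<sigma>1) (qconv d n g00 g01 g10 g11 \<rho>2 \<sigma>2))
     \<le> W1 d n (mdiff \<rho>1 \<rho>2) + W1 d n (mdiff \<sigma>1 \<sigma>2)"
proof -
  let ?C = "qconv d n g00 g01 g10 g11"
  have "W1 d n (mdiff (?C \<rho>1 \<sigma>1) (?C \<rho>2 \<sigma>2))
      \<le> W1 d n (mdiff (?C \<rho>1 \<sigma>1) (?C \<rho>2 \<sigma>1)) + W1 d n (mdiff (?C \<rho>2 \<sigma>1) (?C \<rho>2 \<sigma>2))"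
  proof (rule W1_triangle)
    show "W1set d n (mdiff (?C \<rho>1 \<sigma>1) (?C \<rho>2 \<sigma>1)) \<noteq> {}"
      by (rule W1set_nonempty[OF dpos]; rule qconv_state; fact)
    show "W1set d n (mdiff (?C \<rho>2 \<sigma>1) (?C \<rho>2 \<sigma>2)) \<noteq> {}"
      by (rule W1set_nonempty[OF dpos]; rule qconv_state; fact)
  qed (simp add: mdiff_def)
  also have "\<dots> \<le> W1 d n (mdiff \<rho>1 \<rho>2) + W1 d n (mdiff \<sigma>1 \<sigma>2)"
    by (intro add_mono part1 part2; fact)
  finally show ?thesis .
qed

end

theorem mainTheorem9:
  fixes d n :: nat and g00 g01 g10 g11 :: int
    and \<rho> \<tau> \<sigma> \<rho>1 \<rho>2 \<sigma>1 \<sigma>2 :: "(nat \<Rightarrow> nat) \<Rightarrow> (nat \<Rightarrow> nat) \<Rightarrow> complex"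
  assumes "prime d" and "n \<ge> 1"
    and "det2 g00 g01 g10 g11 mod int d \<noteq> 0"
    and "qstate d n \<rho>" "qstate d n \<tau>" "qstate d n \<sigma>"
    and "qstate d n \<rho>1" "qstate d n \<rho>2" "qstate d n \<sigma>1" "qstate d n \<sigma>2"
  shows "(odd_pos d g00 g01 g10 g11 \<longrightarrow>
            W1 d n (mdiff (qconv d n g00 g01 g10 g11 \<sigma> \<rho>) (qconv d n g00 g01 g10 g11 \<sigma> \<tau>))
              \<le> W1 d n (mdiff \<rho> \<tau>))
       \<and> (even_pos d g00 g01 g10 g11 \<longrightarrow>
            W1 d n (mdiff (qconv d n g00 g01 g10 g11 \<rho> \<sigma>) (qconv d n g00 g01 g10 g11 \<tau> \<sigma>))
              \<le> W1 d n (mdiff \<rho> \<tau>))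
       \<and> (positive_G d g00 g01 g10 g11 \<longrightarrow>
            W1 d n (mdiff (qconv d n g00 g01 g10 g11 \<rho>1 \<sigma>1) (qconv d n g00 g01 g10 g11 \<rho>2 \<sigma>2))
              \<le> W1 d n (mdiff \<rho>1 \<rho>2) + W1 d n (mdiff \<sigma>1 \<sigma>2))"
proof -
  interpret cs d n g00 g01 g10 g11 by unfold_locales (use assms in auto)
  show ?thesis using part1[OF assms(6,4,5)] part2[OF assms(6,4,5)] part3[OF assms(7-10)] by simp
qed

end
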